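(* Let $d,n\ge1$, let $\kappa\ge1$ divide $d$, $d'=d/\kappa$, $r\ge2$, $\mathbf r=(r,\dots,r)\in\mathbb{N}^d$ and $\mathbf r'=(r^\kappa,\dots,r^\kappa)\in\mathbb{N}^{d'}$. Let $A_1,\dots,A_{d'}\in\mathbb{R}^{m\times n^\kappa}$, $\mathcal{A}(\mathcal{Y})=\mathcal{Y}\times_1A_1\times_2\cdots\times_{d'}A_{d'}$, let $A_{2nd}\in\mathbb{R}^{m_{2nd}\times m^{d'}}$ and $\mathcal{A}_{2nd}(\mathcal{X})=A_{2nd}(\mathrm{vect}(\mathcal{A}(\mathcal{R}(\mathcal{X}))))$. Assume each $A_i$ has the RIP$(\varepsilon,\mathcal{S}_{1,2})$ property, where $\delta=12d'r^d\varepsilon<1$, and that the map $\mathcal{Z}\mapsto A_{2nd}\,\mathrm{vect}(\mathcal{Z})$ has the RIP$(\delta/3,\mathcal{B}_{1+\varepsilon,\varepsilon,1-\delta/3,\mathbf r'})$ property, where $\mathcal{B}$ is taken among $d'$-mode tensors in $\mathbb{R}^{m\times\cdots\times m}$. Then for all $\mathcal{X}\in\mathbb{R}^{n\times\cdots\times n}$ ($d$ modes) with HOSVD rank at most $\mathbf r$, $$(1-\delta)\|\mathcal{X}\|^2\le\|\mathcal{A}_{2nd}(\mathcal{X})\|^2\le(1+\delta)\|\mathcal{X}\|^2.$$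
   Context: $\|\cdot\|$ is the Frobenius (resp. Euclidean) norm; $\mathrm{vect}$ is vectorization. The $j$-mode product: $(\mathcal{X}\times_jU)_{i_1,\dots,\ell,\dots,i_D}=\sum_{i_j}\mathcal{X}_{i_1,\dots,i_j,\dots,i_D}U_{\ell,i_j}$. HOSVD rank at most $(r,\dots,r)$ means $\mathcal{X}\in\mathcal{U}_1\otimes\cdots\otimes\mathcal{U}_d$ with subspaces $\mathcal{U}_i\subset\mathbb{R}^n$, $\dim\mathcal{U}_i=r$. $\mathcal{R}$ is the linear reshaping map with $\mathcal{R}(\mathbf{x}^1\circ\cdots\circ\mathbf{x}^d)=\bigcirc_{i=1}^{d'}(\mathbf{x}^{\kappa(i-1)+1}\otimes\cdots\otimes\mathbf{x}^{\kappa i})$ ($\circ$ outer, $\otimes$ Kronecker product). $\mathcal{S}_1=\{\mathbf{u}^1\otimes\cdots\otimes\mathbf{u}^\kappa:\mathbf{u}^i\in\mathbb{S}^{n-1}\}$, $\mathcal{S}_2=\{(\mathbf{x}+\mathbf{y})/\|\mathbf{x}+\mathbf{y}\|_2:\mathbf{x},\mathbf{y}\in\mathcal{S}_1,\langle\mathbf{x},\mathbf{y}\rangle=0\}$, $\mathcal{S}_{1,2}=\mathcal{S}_1\cup\mathcal{S}_2$. A linear map $L$ has RIP$(\varepsilon,\mathcal{S})$ if $(1-\varepsilon)\|s\|^2\le\|L(s)\|^2\le(1+\varepsilon)\|s\|^2$ for all $s\in\mathcal{S}$. For $R\ge0$, $\mu,\theta\ge0$ and $\mathbf s=(s,\dots,s)\in\mathbb{N}^D$,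 the set $\mathcal{B}_{R,\mu,\theta,\mathbf s}$ of nearly orthogonal $D$-mode tensors in $\mathbb{R}^{p\times\cdots\times p}$ consists of those $\mathcal{X}$ that can be written $\mathcal{X}=\sum_{k_1,\dots,k_D=1}^{s}\mathcal{C}(k_1,\dots,k_D)\,\mathbf{u}^1_{k_1}\circ\cdots\circ\mathbf{u}^D_{k_D}$ with $\mathbf{u}^i_k\in\mathbb{R}^p$ such that (a) $\|\mathbf{u}^i_{k}\|_2\le R$ for all $i,k$; (b) $|\langle\mathbf{u}^i_k,\mathbf{u}^i_{k'}\rangle|\le\mu$ for all $i$ and $k\ne k'$; (c) $\|\mathcal{C}\|_F=1$; (d) $\mathcal{C}$ has orthogonal subtensors: for every $i$ and $p'\ne q$, $\sum_{k_j,\,j\ne i}\mathcal{C}(k_1,\dots,p',\dots,k_D)\mathcal{C}(k_1,\dots,q,\dots,k_D)=0$ (with $p',q$ in position $i$); (e) $\|\mathcal{X}\|_F\ge\theta$. *)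

theory Defs
  imports Complex_Main
begin

text \<open>Multi-indices: lists of length D with entries in P. A tensor with D modes whose
  mode index sets are all P is a function on tidx D P (values outside are irrelevant).
  Vectors in R^n are functions on {..<n}; vectors in R^(n^kappa) are indexed by tidx kappa {..<n}
  (Kronecker-product ordering), matrices are functions row => column-index => real.\<close>

definition tidx :: "nat \<Rightarrow> 'a set \<Rightarrow> 'a list set" where
  "tidx D P = {xs. length xs = D \<and> set xs \<subseteq> P}"

definition sqn :: "'a set \<Rightarrow> ('a \<Rightarrow> real) \<Rightarrow> real" where
  "sqn I f = (\<Sum>x\<in>I. (f x)\<^sup>2)"

definition inner_on :: "'a set \<Rightarrow> ('a \<Rightarrow> real) \<Rightarrow> ('a \<Rightarrow> real) \<Rightarrow> real" where
  "inner_on I f g = (\<Sum>x\<in>I. f x * g x)"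

definition lin_apply :: "('r \<Rightarrow> 'c \<Rightarrow> real) \<Rightarrow> 'c set \<Rightarrow> ('c \<Rightarrow> real) \<Rightarrow> 'r \<Rightarrow> real" where
  "lin_apply M C v = (\<lambda>l. \<Sum>c\<in>C. M l c * v c)"

definition rip :: "'a set \<Rightarrow> 'b set \<Rightarrow> (('a \<Rightarrow> real) \<Rightarrow> ('b \<Rightarrow> real)) \<Rightarrow> real \<Rightarrow> ('a \<Rightarrow> real) set \<Rightarrow> bool" where
  "rip I J L eps S \<longleftrightarrow> (\<forall>s\<in>S. (1 - eps) * sqn I s \<le> sqn J (L s) \<and> sqn J (L s) \<le> (1 + eps) * sqn I s)"

definition S1 :: "nat \<Rightarrow> nat \<Rightarrow> (nat list \<Rightarrow> real) set" where
  "S1 \<kappa> n = {(\<lambda>c. \<Prod>j<\<kappa>. u j (c ! j)) | u. \<forall>j<\<kappa>. sqn {..<n} (u j) = 1}"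

definition S2 :: "nat \<Rightarrow> nat \<Rightarrow> (nat list \<Rightarrow> real) set" where
  "S2 \<kappa> n = {(\<lambda>c. (x c + y c) / sqrt (sqn (tidx \<kappa> {..<n}) (\<lambda>c. x c + y c))) | x y.
      x \<in> S1 \<kappa> n \<and> y \<in> S1 \<kappa> n \<and> inner_on (tidx \<kappa> {..<n}) x y = 0}"

definition S12 :: "nat \<Rightarrow> nat \<Rightarrow> (nat list \<Rightarrow> real) set" where
  "S12 \<kappa> n = S1 \<kappa> n \<union> S2 \<kappa> n"

definition nearly_orth :: "nat \<Rightarrow> nat \<Rightarrow> nat \<Rightarrow> real \<Rightarrow> real \<Rightarrow> real \<Rightarrow> (nat list \<Rightarrow> real) set" where
  "nearly_orth D p s R \<mu> \<theta> = {X. \<exists>(C :: nat list \<Rightarrow> real) (u :: nat \<Rightarrow> nat \<Rightarrow> nat \<Rightarrow> real).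
      (\<forall>ls\<in>tidx D {..<p}. X ls = (\<Sum>ks\<in>tidx D {..<s}. C ks * (\<Prod>i<D. u i (ks ! i) (ls ! i)))) \<and>
      (\<forall>i<D. \<forall>k<s. sqrt (sqn {..<p} (u i k)) \<le> R) \<and>
      (\<forall>i<D. \<forall>k<s. \<forall>k'<s. k \<noteq> k' \<longrightarrow> \<bar>inner_on {..<p} (u i k) (u i k')\<bar> \<le> \<mu>) \<and>
      sqrt (sqn (tidx D {..<s}) C) = 1 \<and>
      (\<forall>i<D. \<forall>a<s. \<forall>b<s. a \<noteq> b \<longrightarrow>
          (\<Sum>ks\<in>{ks\<in>tidx D {..<s}. ks ! i = a}. C ks * C (ks[i := b])) = 0) \<and>
      sqrt (sqn (tidx D {..<p}) X) \<ge> \<theta>}"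

text \<open>HOSVD rank at most (r,...,r): X lies in U_1 (x) ... (x) U_d with dim U_i = r,
  i.e. each U_i has a basis b i 0, ..., b i (r-1) of linearly independent vectors in R^n and X
  is a linear combination of the outer products of basis vectors.\<close>
definition hosvd_rank_le :: "nat \<Rightarrow> nat \<Rightarrow> nat \<Rightarrow> (nat list \<Rightarrow> real) \<Rightarrow> bool" where
  "hosvd_rank_le d n r X \<longleftrightarrow> (\<exists>(b :: nat \<Rightarrow> nat \<Rightarrow> nat \<Rightarrow> real) (G :: nat list \<Rightarrow> real).
      (\<forall>i<d. \<forall>c :: nat \<Rightarrow> real. (\<forall>j<n. (\<Sum>k<r. c k * b i k j) = 0) \<longrightarrow> (\<forall>k<r. c k = 0)) \<and>
      (\<forall>is\<in>tidx d {..<n}. X is = (\<Sum>ks\<in>tidx d {..<r}. G ks * (\<Prod>i<d. b i (ks ! i) (is ! i)))))"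

text \<open>Reshaping R: modes grouped in consecutive blocks of kappa; the new mode-i index is the
  multi-index (i_{kappa(i-1)+1},...,i_{kappa i}).\<close>
definition reshape :: "(nat list \<Rightarrow> real) \<Rightarrow> nat list list \<Rightarrow> real" where
  "reshape X = (\<lambda>jss. X (concat jss))"

definition multi_mode_prod :: "nat \<Rightarrow> 'c set \<Rightarrow> (nat \<Rightarrow> nat \<Rightarrow> 'c \<Rightarrow> real) \<Rightarrow> ('c list \<Rightarrow> real) \<Rightarrow> nat list \<Rightarrow> real" where
  "multi_mode_prod D C A Y = (\<lambda>ls. \<Sum>jss\<in>tidx D C. Y jss * (\<Prod>i<D. A i (ls ! i) (jss ! i)))"

definition A2nd :: "nat \<Rightarrow> nat \<Rightarrow> nat \<Rightarrow> nat \<Rightarrow> (nat \<Rightarrow> nat \<Rightarrow> nat list \<Rightarrow> real) \<Rightarrow> (nat \<Rightarrow> nat list \<Rightarrow> real)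
    \<Rightarrow> (nat list \<Rightarrow> real) \<Rightarrow> nat \<Rightarrow> real" where
  "A2nd \<kappa> d' n m A A2 X =
     lin_apply A2 (tidx d' {..<m}) (multi_mode_prod d' (tidx \<kappa> {..<n}) A (reshape X))"

end

theory Submission
  imports Defs "HOL-Analysis.Function_Topology" "Jordan_Normal_Form.Determinant"
begin
definition onz :: "nat \<Rightarrow> nat \<Rightarrow> (nat \<Rightarrow> nat \<Rightarrow> real) \<Rightarrow> bool" where
  "onz p s w \<longleftrightarrow> (\<forall>k<s. sqn {..<p} (w k) = 0 \<or> sqn {..<p} (w k) = 1) \<and>
     (\<forall>k<s. \<forall>k'<s. k \<noteq> k' \<longrightarrow> inner_on {..<p} (w k) (w k') = 0)"

definition inspan :: "nat \<Rightarrow> nat \<Rightarrow> (nat \<Rightarrow> nat \<Rightarrow> real) \<Rightarrow> (nat \<Rightarrow> real) \<Rightarrow> bool" where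
  "inspan p s w f \<longleftrightarrow> (\<exists>c. \<forall>x<p. f x = (\<Sum>k<s. c k * w k x))"

lemma sqn_nonneg: "sqn I f \<ge> 0"
  unfolding sqn_def by (simp add: sum_nonneg)

lemma sqn_zeroD: "finite I \<Longrightarrow> sqn I f = 0 \<Longrightarrow> x \<in> I \<Longrightarrow> f x = 0"
  unfolding sqn_def using sum_nonneg_eq_0_iff[of I "\<lambda>x. (f x)\<^sup>2"] by auto

lemma inner_self: "inner_on I f f = sqn I f"
  unfolding inner_on_def sqn_def by (simp add: power2_eq_square)

lemma inner_sym: "inner_on I f g = inner_on I g f"
  unfolding inner_on_def by (simp add: mult.commute)

lemma onz_inner:
  assumes "onz p s w" "k < s" "k' < s"
  shows "inner_on {..<p} (w k) (w k') = (if k = k' then sqn {..<p} (w k) else 0)"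
  using assms unfolding onz_def by (auto simp: inner_self)

lemma onz_scale:
  assumes "onz p s w" "k < s" "x < p"
  shows "sqn {..<p} (w k) * w k x = w k x"
proof -
  have "sqn {..<p} (w k) = 0 \<or> sqn {..<p} (w k) = 1" using assms unfolding onz_def by auto
  then show ?thesis using sqn_zeroD[of "{..<p}" "w k" x] assms by auto
qed

lemma inner_lincomb:
  "inner_on {..<p} (\<lambda>x. \<Sum>k<s. c k * w k x) g = (\<Sum>k<s. c k * inner_on {..<p} (w k) g)"
  unfolding inner_on_def by (simp add: sum_distrib_left sum_distrib_right mult.assoc, rule sum.swap)

lemma inner_cong:
  assumes "\<forall>x<p. f x = f' x" "\<forall>x<p. g x = g' x"
  shows "inner_on {..<p} f g = inner_on {..<p} f' g'"
  unfolding inner_on_def using assms by (intro sum.cong) auto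

lemma sqn_cong:
  assumes "\<forall>x\<in>I. f x = f' x"
  shows "sqn I f = sqn I f'"
  unfolding sqn_def using assms by (intro sum.cong) auto

lemma inspan_expand:
  assumes onz: "onz p s w" and sp: "inspan p s w f" and x: "x < p"
  shows "f x = (\<Sum>k<s. inner_on {..<p} f (w k) * w k x)"
proof -
  obtain c where c: "\<forall>x<p. f x = (\<Sum>k<s. c k * w k x)" using sp unfolding inspan_def by auto
  have ip: "inner_on {..<p} f (w j) = c j * sqn {..<p} (w j)" if j: "j < s" for j
  proof -
    have "inner_on {..<p} f (w j) = inner_on {..<p} (\<lambda>x. \<Sum>k<s. c k * w k x) (w j)"
      using c by (intro inner_cong) auto
    also have "\<dots> = (\<Sum>k<s. c k * inner_on {..<p} (w k) (w j))" by (rule inner_lincomb)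
    also have "\<dots> = (\<Sum>k<s. if k = j then c j * sqn {..<p} (w j) else 0)"
      using onz_inner[OF onz _ j] by (intro sum.cong) auto
    also have "\<dots> = c j * sqn {..<p} (w j)" using j by simp
    finally show ?thesis .
  qed
  have "(\<Sum>k<s. inner_on {..<p} f (w k) * w k x) = (\<Sum>k<s. c k * (sqn {..<p} (w k) * w k x))"
    using ip by (intro sum.cong) auto
  also have "\<dots> = (\<Sum>k<s. c k * w k x)"
    using onz_scale[OF onz _ x] by (intro sum.cong) auto
  also have "\<dots> = f x" using c x by simp
  finally show ?thesis by simp
qed

lemma onz_action:
  assumes onz: "onz p s w" and sp: "inspan p s w f" and x: "x < p"
  shows "(\<Sum>y<p. f y * (\<Sum>k<s. w k y * w k x)) = f x"
proof -
  have "(\<Sum>y<p. f y * (\<Sum>k<s. w k y * w k x)) = (\<Sum>k<s. inner_on {..<p} f (w k) * w k x)"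
    unfolding inner_on_def by (simp add: sum_distrib_left sum_distrib_right mult.assoc mult.left_commute, rule sum.swap)
  also have "\<dots> = f x" using inspan_expand[OF assms] by simp
  finally show ?thesis .
qed

lemma inspan_mono_lincomb:
  assumes "\<forall>k<s. inspan p t q (v k)" and "inspan p s v f"
  shows "inspan p t q f"
proof -
  obtain c where c: "\<forall>x<p. f x = (\<Sum>k<s. c k * v k x)" using assms(2) unfolding inspan_def by auto
  have "\<forall>k<s. \<exists>d. \<forall>x<p. v k x = (\<Sum>j<t. d j * q j x)" using assms(1) unfolding inspan_def by auto
  then obtain d where d: "\<forall>k<s. \<forall>x<p. v k x = (\<Sum>j<t. d k j * q j x)" by metis
  show ?thesis unfolding inspan_def
  proof (intro exI allI impI)
    fix x assume x: "x < p"
    have "f x = (\<Sum>k<s. c k * (\<Sum>j<t. d k j * q j x))" using c d x by simp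
    also have "\<dots> = (\<Sum>j<t. (\<Sum>k<s. c k * d k j) * q j x)"
      by (simp add: sum_distrib_left sum_distrib_right mult.assoc mult.left_commute, rule sum.swap)
    finally show "f x = (\<Sum>j<t. (\<Sum>k<s. c k * d k j) * q j x)" .
  qed
qed

lemma inspan_scale:
  assumes "inspan p s w f"
  shows "inspan p s w (\<lambda>x. a * f x)"
proof -
  obtain c where c: "\<forall>x<p. f x = (\<Sum>k<s. c k * w k x)" using assms unfolding inspan_def by auto
  show ?thesis unfolding inspan_def
    by (rule exI[of _ "\<lambda>k. a * c k"]) (simp add: c sum_distrib_left mult.assoc)
qed

lemma inspan_self:
  assumes "k < s"
  shows "inspan p s w (w k)"
  unfolding inspan_def
proof (rule exI[of _ "\<lambda>j. if j = k then 1 else 0"], intro allI impI)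
  fix x
  have "(\<Sum>j<s. (if j = k then 1 else 0) * w j x) = (\<Sum>j<s. if j = k then w j x else 0)"
    by (intro sum.cong) auto
  then show "w k x = (\<Sum>j<s. (if j = k then 1 else 0) * w j x)" using assms by simp
qed

lemma gram_schmidt_ex:
  "\<exists>q. onz p s q \<and> (\<forall>k<s. inspan p s q (v k))"
proof (induction s)
  case 0
  then show ?case unfolding onz_def by auto
next
  case (Suc s)
  then obtain q where q: "onz p s q" and sp: "\<forall>k<s. inspan p s q (v k)" by auto
  define r where "r = (\<lambda>x. v s x - (\<Sum>j<s. inner_on {..<p} (v s) (q j) * q j x))"
  define nr where "nr = sqrt (sqn {..<p} r)"
  define q' where "q' = q(s := (if sqn {..<p} r = 0 then (\<lambda>_. 0) else (\<lambda>x. r x / nr)))"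
  have q'k: "q' k = q k" if "k < s" for k using that unfolding q'_def by auto
  have rperp: "inner_on {..<p} (q k) r = 0" if k: "k < s" for k
  proof -
    have "inner_on {..<p} (q k) r = inner_on {..<p} (q k) (v s) -
        (\<Sum>j<s. inner_on {..<p} (v s) (q j) * inner_on {..<p} (q k) (q j))"
    proof -
      have "inner_on {..<p} (q k) r = inner_on {..<p} (q k) (v s) -
          inner_on {..<p} (q k) (\<lambda>x. \<Sum>j<s. inner_on {..<p} (v s) (q j) * q j x)"
        unfolding r_def inner_on_def by (simp add: right_diff_distrib sum_subtractf)
      also have "inner_on {..<p} (q k) (\<lambda>x. \<Sum>j<s. inner_on {..<p} (v s) (q j) * q j x) =
          (\<Sum>j<s. inner_on {..<p} (v s) (q j) * inner_on {..<p} (q j) (q k))"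
        by (subst inner_sym) (rule inner_lincomb)
      finally show ?thesis by (simp add: inner_sym)
    qed
    also have "\<dots> = inner_on {..<p} (q k) (v s) - inner_on {..<p} (v s) (q k) * sqn {..<p} (q k)"
    proof -
      have "(\<Sum>j<s. inner_on {..<p} (v s) (q j) * inner_on {..<p} (q k) (q j)) =
            (\<Sum>j<s. if j = k then inner_on {..<p} (v s) (q k) * sqn {..<p} (q k) else 0)"
        using onz_inner[OF q k] by (intro sum.cong) auto
      then show ?thesis using k by simp
    qed
    also have "\<dots> = 0"
    proof -
      have "sqn {..<p} (q k) = 0 \<or> sqn {..<p} (q k) = 1" using q k unfolding onz_def by auto
      moreover have "inner_on {..<p} (q k) (v s) = 0" if "sqn {..<p} (q k) = 0"
        unfolding inner_on_def using sqn_zeroD[OF _ that] by simp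
      ultimately show ?thesis by (auto simp: inner_sym)
    qed
    finally show ?thesis .
  qed
  have onz': "onz p (Suc s) q'"
    unfolding onz_def
  proof (intro conjI allI impI)
    fix k assume k: "k < Suc s"
    show "sqn {..<p} (q' k) = 0 \<or> sqn {..<p} (q' k) = 1"
    proof (cases "k = s")
      case True
      show ?thesis
      proof (cases "sqn {..<p} r = 0")
        case True then show ?thesis using \<open>k = s\<close> by (simp add: q'_def sqn_def)
      next
        case False
        then have pos: "sqn {..<p} r > 0" using sqn_nonneg[of "{..<p}" r] by linarith
        have "sqn {..<p} (q' k) = sqn {..<p} r / nr^2"
          using False \<open>k = s\<close> by (simp add: q'_def sqn_def power_divide sum_divide_distrib)
        also have "\<dots> = 1" using pos unfolding nr_def by simp
        finally show ?thesis by simp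
      qed
    next
      case False then show ?thesis using q k q'k unfolding onz_def by auto
    qed
  next
    fix k k' assume k: "k < Suc s" and k': "k' < Suc s" and ne: "k \<noteq> k'"
    have gen: "inner_on {..<p} (q j) (q' s) = 0" if j: "j < s" for j
    proof (cases "sqn {..<p} r = 0")
      case True then show ?thesis by (simp add: q'_def inner_on_def)
    next
      case False
      have "inner_on {..<p} (q j) (q' s) = inner_on {..<p} (q j) r / nr"
        using False by (simp add: q'_def inner_on_def sum_divide_distrib)
      then show ?thesis using rperp[OF j] by simp
    qed
    show "inner_on {..<p} (q' k) (q' k') = 0"
    proof (cases "k = s")
      case True
      then have "k' < s" using k' ne by auto
      then show ?thesis using gen[of k'] True q'k[of k'] by (simp add: inner_sym)
    next
      case False
      then have ks: "k < s" using k by auto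
      show ?thesis
      proof (cases "k' = s")
        case True then show ?thesis using gen[OF ks] q'k[OF ks] by simp
      next
        case False
        then have "k' < s" using k' by auto
        then show ?thesis using q ks ne q'k[OF ks] q'k[of k'] unfolding onz_def by auto
      qed
    qed
  qed
  have sp': "inspan p (Suc s) q' (v k)" if k: "k < Suc s" for k
  proof (cases "k = s")
    case False
    then have ks: "k < s" using k by auto
    obtain c where c: "\<forall>x<p. v k x = (\<Sum>j<s. c j * q j x)" using sp ks unfolding inspan_def by auto
    show ?thesis unfolding inspan_def
    proof (intro exI[of _ "c(s := 0)"] allI impI)
      fix x assume "x < p"
      then show "v k x = (\<Sum>j<Suc s. (c(s := 0)) j * q' j x)"
        using c q'k by simp
    qed
  next
    case True
    define c where "c = (\<lambda>j. if j < s then inner_on {..<p} (v s) (q j) else if sqn {..<p} r = 0 then 0 else nr)"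
    show ?thesis unfolding inspan_def
    proof (intro exI[of _ c] allI impI)
      fix x assume x: "x < p"
      have "(\<Sum>j<Suc s. c j * q' j x) = (\<Sum>j<s. inner_on {..<p} (v s) (q j) * q j x) + c s * q' s x"
        using q'k unfolding c_def by simp
      also have "c s * q' s x = r x"
      proof (cases "sqn {..<p} r = 0")
        case True then show ?thesis using sqn_zeroD[OF _ True, of x] x by (simp add: c_def q'_def)
      next
        case False
        then have "nr \<noteq> 0" unfolding nr_def using sqn_nonneg[of "{..<p}" r] by simp
        then show ?thesis using False by (simp add: c_def q'_def)
      qed
      finally show "v k x = (\<Sum>j<Suc s. c j * q' j x)" using True unfolding r_def by simp
    qed
  qed
  show ?case using onz' sp' by blast
qed

lemma finite_tidx: "finite P \<Longrightarrow> finite (tidx D P)"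
  unfolding tidx_def using finite_lists_length_eq[of P D] by (simp add: conj_commute)

lemma card_tidx: "finite P \<Longrightarrow> card (tidx D P) = card P ^ D"
  unfolding tidx_def using card_lists_length_eq[of P D] by (simp add: conj_commute)

lemma tidx_mem: "l \<in> tidx D P \<longleftrightarrow> length l = D \<and> (\<forall>i<D. l ! i \<in> P)"
  unfolding tidx_def by (auto simp: set_conv_nth)

lemma tidx_update: "l \<in> tidx D P \<Longrightarrow> y \<in> P \<Longrightarrow> l[i := y] \<in> tidx D P"
  unfolding tidx_def using set_update_subset_insert[of l i y] by auto

lemma tidx_Suc: "tidx (Suc D) P = (\<lambda>(xs, x). xs @ [x]) ` (tidx D P \<times> P)"
proof (intro equalityI subsetI)
  fix l assume "l \<in> tidx (Suc D) P"
  then have l: "length l = Suc D" "set l \<subseteq> P" unfolding tidx_def by auto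
  then have "l = butlast l @ [last l]" by (metis append_butlast_last_id length_0_conv nat.distinct(1))
  moreover have "butlast l \<in> tidx D P" using l unfolding tidx_def
    by (auto dest: in_set_butlastD)
  moreover have "last l \<in> P" using l by (metis last_in_set length_0_conv nat.distinct(1) subsetD)
  ultimately show "l \<in> (\<lambda>(xs, x). xs @ [x]) ` (tidx D P \<times> P)" by force
next
  fix l assume "l \<in> (\<lambda>(xs, x). xs @ [x]) ` (tidx D P \<times> P)"
  then show "l \<in> tidx (Suc D) P" unfolding tidx_def by auto
qed

lemma sum_prod_tidx:
  fixes f :: "nat \<Rightarrow> 'a \<Rightarrow> real"
  assumes "finite P"
  shows "(\<Sum>c\<in>tidx D P. \<Prod>j<D. f j (c ! j)) = (\<Prod>j<D. \<Sum>x\<in>P. f j x)"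
proof (induction D)
  case 0
  have "tidx 0 P = {[]}" unfolding tidx_def by auto
  then show ?case by simp
next
  case (Suc D)
  have inj: "inj_on (\<lambda>(xs, x). xs @ [x]) (tidx D P \<times> P)"
    by (auto simp: inj_on_def)
  have "(\<Sum>c\<in>tidx (Suc D) P. \<Prod>j<Suc D. f j (c ! j)) =
        (\<Sum>(xs, x)\<in>tidx D P \<times> P. \<Prod>j<Suc D. f j ((xs @ [x]) ! j))"
    unfolding tidx_Suc by (subst sum.reindex[OF inj]) (simp add: case_prod_unfold)
  also have "\<dots> = (\<Sum>(xs, x)\<in>tidx D P \<times> P. (\<Prod>j<D. f j (xs ! j)) * f D x)"
  proof (intro sum.cong refl, clarify)
    fix xs x assume xs: "xs \<in> tidx D P"
    then have len: "length xs = D" unfolding tidx_def by auto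
    have "(\<Prod>j<Suc D. f j ((xs @ [x]) ! j)) = (\<Prod>j<D. f j ((xs @ [x]) ! j)) * f D x"
      using len by (simp add: nth_append)
    also have "(\<Prod>j<D. f j ((xs @ [x]) ! j)) = (\<Prod>j<D. f j (xs ! j))"
      using len by (intro prod.cong) (auto simp: nth_append)
    finally show "(\<Prod>j<Suc D. f j ((xs @ [x]) ! j)) = (\<Prod>j<D. f j (xs ! j)) * f D x" .
  qed
  also have "\<dots> = (\<Sum>xs\<in>tidx D P. \<Prod>j<D. f j (xs ! j)) * (\<Sum>x\<in>P. f D x)"
    by (simp add: sum.cartesian_product[symmetric] sum_product)
  also have "\<dots> = (\<Prod>j<Suc D. \<Sum>x\<in>P. f j x)" using Suc by simp
  finally show ?case .
qed

lemma sum_split_tidx: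
  assumes P: "finite P" and i: "i < D" and c0: "c0 \<in> P"
  shows "(\<Sum>l\<in>tidx D P. F l) = (\<Sum>l0\<in>{l\<in>tidx D P. l ! i = c0}. \<Sum>y\<in>P. F (l0[i := y]))"
proof -
  let ?Z = "{l\<in>tidx D P. l ! i = c0}"
  have len: "length l = D" if "l \<in> tidx D P" for l using that unfolding tidx_def by auto
  have bij: "bij_betw (\<lambda>(l0, y). l0[i := y]) (?Z \<times> P) (tidx D P)"
  proof (rule bij_betwI[where g = "\<lambda>l. (l[i := c0], l ! i)"])
    show "(\<lambda>(l0, y). l0[i := y]) \<in> ?Z \<times> P \<rightarrow> tidx D P"
      by (auto intro: tidx_update)
    show "(\<lambda>l. (l[i := c0], l ! i)) \<in> tidx D P \<rightarrow> ?Z \<times> P"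
    proof
      fix l assume l: "l \<in> tidx D P"
      have "l[i := c0] \<in> tidx D P" using tidx_update[OF l c0] .
      moreover have "l ! i \<in> P" using l i unfolding tidx_mem by auto
      moreover have "l[i := c0] ! i = c0" using len[OF l] i by simp
      ultimately show "(l[i := c0], l ! i) \<in> ?Z \<times> P" by simp
    qed
    show "(\<lambda>l. (l[i := c0], l ! i)) ((\<lambda>(l0, y). l0[i := y]) x) = x" if "x \<in> ?Z \<times> P" for x
      using that i len by (auto simp: list_update_same_conv)
    show "(\<lambda>(l0, y). l0[i := y]) ((\<lambda>l. (l[i := c0], l ! i)) y) = y" if "y \<in> tidx D P" for y
      using that i len by auto
  qed
  have "(\<Sum>l\<in>tidx D P. F l) = (\<Sum>x\<in>?Z \<times> P. F ((\<lambda>(l0, y). l0[i := y]) x))"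
    using sum.reindex_bij_betw[OF bij, of F] by simp
  also have "\<dots> = (\<Sum>l0\<in>?Z. \<Sum>y\<in>P. F (l0[i := y]))"
    by (simp add: sum.cartesian_product case_prod_unfold)
  finally show ?thesis .
qed

lemma prod_remove_nat:
  assumes "i < (D::nat)"
  shows "(\<Prod>k<D. g k) = g i * (\<Prod>k\<in>{..<D} - {i}. g k)"
  using assms prod.remove[of "{..<D}" i g] by simp

lemma one_mode:
  fixes T :: "nat list \<Rightarrow> real" and S :: "nat \<Rightarrow> nat \<Rightarrow> real"
  assumes P: "finite P" and i: "i < D" and tg: "tg \<in> P"
    and act: "\<forall>l\<in>tidx D P. (\<Sum>y\<in>P. T (l[i := y]) * S i y) = T (l[i := tg])"
  shows "(\<Sum>l\<in>tidx D P. T l * (\<Prod>k<D. S k (l ! k))) =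
         (\<Sum>l\<in>tidx D P. T l * (\<Prod>k<D. (S(i := (\<lambda>y. if y = tg then 1 else 0))) k (l ! k)))"
proof -
  let ?Z = "{l\<in>tidx D P. l ! i = tg}"
  let ?S' = "S(i := (\<lambda>y. if y = tg then 1 else 0))"
  have len: "length l = D" if "l \<in> tidx D P" for l using that unfolding tidx_def by auto
  have rest: "(\<Prod>k\<in>{..<D} - {i}. G k ((l0[i := y]) ! k)) = (\<Prod>k\<in>{..<D} - {i}. G k (l0 ! k))"
    for G l0 y by (intro prod.cong) auto
  have inner: "(\<Sum>y\<in>P. T (l0[i := y]) * (\<Prod>k<D. G k ((l0[i := y]) ! k))) =
        (\<Prod>k\<in>{..<D} - {i}. G k (l0 ! k)) * (\<Sum>y\<in>P. T (l0[i := y]) * G i y)"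
    if l0: "l0 \<in> tidx D P" for l0 and G :: "nat \<Rightarrow> nat \<Rightarrow> real"
  proof -
    have "(\<Sum>y\<in>P. T (l0[i := y]) * (\<Prod>k<D. G k ((l0[i := y]) ! k))) =
          (\<Sum>y\<in>P. T (l0[i := y]) * (G i y * (\<Prod>k\<in>{..<D} - {i}. G k (l0 ! k))))"
      using i len[OF l0] by (intro sum.cong refl) (simp add: prod_remove_nat[OF i] rest)
    then show ?thesis by (simp add: sum_distrib_right sum_distrib_left mult_ac)
  qed
  have "(\<Sum>l\<in>tidx D P. T l * (\<Prod>k<D. S k (l ! k))) =
        (\<Sum>l0\<in>?Z. (\<Prod>k\<in>{..<D} - {i}. S k (l0 ! k)) * (\<Sum>y\<in>P. T (l0[i := y]) * S i y))"
    by (subst sum_split_tidx[OF P i tg]) (intro sum.cong refl, rule inner, simp)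
  also have "\<dots> = (\<Sum>l0\<in>?Z. (\<Prod>k\<in>{..<D} - {i}. ?S' k (l0 ! k)) * (\<Sum>y\<in>P. T (l0[i := y]) * ?S' i y))"
  proof (intro sum.cong refl)
    fix l0 assume l0: "l0 \<in> ?Z"
    have "(\<Sum>y\<in>P. T (l0[i := y]) * ?S' i y) = (\<Sum>y\<in>P. if y = tg then T (l0[i := y]) else 0)"
      by (intro sum.cong) auto
    also have "\<dots> = T (l0[i := tg])" using P tg by (simp add: sum.delta')
    finally have "(\<Sum>y\<in>P. T (l0[i := y]) * ?S' i y) = (\<Sum>y\<in>P. T (l0[i := y]) * S i y)"
      using act l0 by auto
    moreover have "(\<Prod>k\<in>{..<D} - {i}. ?S' k (l0 ! k)) = (\<Prod>k\<in>{..<D} - {i}. S k (l0 ! k))"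
      by (intro prod.cong) auto
    ultimately show "(\<Prod>k\<in>{..<D} - {i}. S k (l0 ! k)) * (\<Sum>y\<in>P. T (l0[i := y]) * S i y) =
        (\<Prod>k\<in>{..<D} - {i}. ?S' k (l0 ! k)) * (\<Sum>y\<in>P. T (l0[i := y]) * ?S' i y)" by simp
  qed
  also have "\<dots> = (\<Sum>l\<in>tidx D P. T l * (\<Prod>k<D. ?S' k (l ! k)))"
    by (subst sum_split_tidx[OF P i tg]) (intro sum.cong refl, rule inner[symmetric], simp)
  finally show ?thesis .
qed

lemma mp_replace:
  fixes T :: "nat list \<Rightarrow> real" and Q R :: "nat \<Rightarrow> nat \<Rightarrow> real" and tg :: "nat \<Rightarrow> nat"
  assumes P: "finite P" and J: "J \<subseteq> {..<D}" and tgP: "\<forall>i\<in>J. tg i \<in> P"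
    and act: "\<forall>i\<in>J. \<forall>l\<in>tidx D P. (\<Sum>y\<in>P. T (l[i := y]) * Q i y) = T (l[i := tg i])"
  shows "(\<Sum>l\<in>tidx D P. T l * (\<Prod>k<D. if k \<in> J then Q k (l ! k) else R k (l ! k))) =
         (\<Sum>l\<in>tidx D P. T l * (\<Prod>k<D. if k \<in> J then (if l ! k = tg k then 1 else 0) else R k (l ! k)))"
proof -
  have fin: "finite J" using J finite_subset by blast
  show ?thesis using fin J tgP act
  proof (induction J arbitrary: R rule: finite_induct)
    case empty
    then show ?case by simp
  next
    case (insert i J)
    define R' where "R' = R(i := Q i)"
    define S0 where "S0 = (\<lambda>k y. if k \<in> J then (if y = tg k then 1 else 0) else R' k y)"
    have iD: "i < D" using insert by auto
    have "(\<Sum>l\<in>tidx D P. T l * (\<Prod>k<D. if k \<in> insert i J then Q k (l ! k) else R k (l ! k))) =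
          (\<Sum>l\<in>tidx D P. T l * (\<Prod>k<D. if k \<in> J then Q k (l ! k) else R' k (l ! k)))"
      unfolding R'_def by (intro sum.cong refl arg_cong2[where f = "(*)"] prod.cong) auto
    also have "\<dots> = (\<Sum>l\<in>tidx D P. T l * (\<Prod>k<D. if k \<in> J then (if l ! k = tg k then 1 else 0) else R' k (l ! k)))"
      using insert by (intro insert.IH) auto
    also have "\<dots> = (\<Sum>l\<in>tidx D P. T l * (\<Prod>k<D. S0 k (l ! k)))"
      unfolding S0_def by simp
    also have "\<dots> = (\<Sum>l\<in>tidx D P. T l * (\<Prod>k<D. (S0(i := (\<lambda>y. if y = tg i then 1 else 0))) k (l ! k)))"
      by (rule one_mode[OF P iD]) (use insert in \<open>auto simp: R'_def S0_def\<close>)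
    also have "\<dots> = (\<Sum>l\<in>tidx D P. T l * (\<Prod>k<D. if k \<in> insert i J then (if l ! k = tg k then 1 else 0) else R k (l ! k)))"
      unfolding R'_def S0_def by (intro sum.cong refl arg_cong2[where f = "(*)"] prod.cong) auto
    finally show ?case .
  qed
qed

definition phi :: "nat \<Rightarrow> (nat \<Rightarrow> 'l \<Rightarrow> real) \<Rightarrow> (nat \<Rightarrow> real) \<Rightarrow> 'l \<Rightarrow> real" where
  "phi p F x \<rho> = (\<Sum>t<p. x t * F t \<rho>)"

definition bf :: "nat \<Rightarrow> 'l set \<Rightarrow> (nat \<Rightarrow> 'l \<Rightarrow> real) \<Rightarrow> (nat \<Rightarrow> real) \<Rightarrow> (nat \<Rightarrow> real) \<Rightarrow> real" where
  "bf p L F x y = (\<Sum>\<rho>\<in>L. phi p F x \<rho> * phi p F y \<rho>)"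

lemma bf_sym: "bf p L F x y = bf p L F y x"
  unfolding bf_def by (simp add: mult.commute)

lemma bf_as_inner:
  "bf p L F y x = inner_on {..<p} y (\<lambda>t. \<Sum>\<rho>\<in>L. F t \<rho> * phi p F x \<rho>)"
  unfolding bf_def inner_on_def phi_def
  by (simp add: sum_distrib_left sum_distrib_right mult_ac, rule sum.swap)

lemma phi_lin: "phi p F (\<lambda>t. x t + c * g t) \<rho> = phi p F x \<rho> + c * phi p F g \<rho>"
  unfolding phi_def by (simp add: algebra_simps sum.distrib sum_distrib_left)

lemma phi_scale: "phi p F (\<lambda>t. x t / c) \<rho> = phi p F x \<rho> / c"
  unfolding phi_def by (simp add: sum_divide_distrib)

lemma phi_cong: "\<forall>t<p. x t = y t \<Longrightarrow> phi p F x \<rho> = phi p F y \<rho>"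
  unfolding phi_def by (intro sum.cong) auto

lemma phi_zero: "phi p F (\<lambda>_. 0) \<rho> = 0"
  unfolding phi_def by simp

lemma bf_lin: "bf p L F (\<lambda>t. x t + c * g t) (\<lambda>t. x t + c * g t) =
   bf p L F x x + 2 * c * bf p L F x g + c^2 * bf p L F g g"
  unfolding bf_def phi_lin by (simp add: algebra_simps sum.distrib sum_distrib_left power2_eq_square)

lemma bf_scale: "bf p L F (\<lambda>t. x t / c) (\<lambda>t. x t / c) = bf p L F x x / c^2"
  unfolding bf_def phi_scale by (simp add: sum_divide_distrib power2_eq_square)

lemma bf_ge_term:
  assumes "finite L" "\<rho> \<in> L"
  shows "bf p L F x x \<ge> (phi p F x \<rho>)^2"
proof -
  have "(phi p F x \<rho>)^2 = (\<Sum>\<rho>'\<in>{\<rho>}. phi p F x \<rho>' * phi p F x \<rho>')" by (simp add: power2_eq_square)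
  also have "\<dots> \<le> bf p L F x x" unfolding bf_def
    by (rule sum_mono2) (use assms in auto)
  finally show ?thesis .
qed

lemma coord_sq_le: "t < (p::nat) \<Longrightarrow> (x t)^2 \<le> sqn {..<p} x"
  unfolding sqn_def by (rule member_le_sum) auto

lemma cont_coord [continuous_intros]: "continuous_on S (\<lambda>x::nat \<Rightarrow> real. x t)"
  by (rule continuous_on_subset[OF continuous_on_product_coordinates]) auto

lemma compact_box: "compact (PiE UNIV (\<lambda>t::nat. if t < p then {-1..1::real} else {0}))"
proof -
  have "compactin (product_topology (\<lambda>_. euclidean) UNIV) (PiE UNIV (\<lambda>t::nat. if t < p then {-1..1::real} else {0}))"
    unfolding compactin_PiE by simp
  then show ?thesis by (simp add: euclidean_product_topology)
qed

lemma max_exists: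
  fixes w :: "nat \<Rightarrow> nat \<Rightarrow> real" and p k :: nat
  defines "U \<equiv> {x::nat\<Rightarrow>real. (\<forall>t. p \<le> t \<longrightarrow> x t = 0) \<and> sqn {..<p} x = 1 \<and> (\<forall>a<k. inner_on {..<p} x (w a) = 0)}"
  assumes ne: "U \<noteq> {}"
  shows "\<exists>x\<in>U. \<forall>y\<in>U. bf p L F y y \<le> bf p L F x x"
proof -
  let ?K = "PiE UNIV (\<lambda>t::nat. if t < p then {-1..1::real} else {0})"
  have sub: "U \<subseteq> ?K"
  proof
    fix x assume x: "x \<in> U"
    have "x t \<in> (if t < p then {-1..1} else {0})" for t
    proof (cases "t < p")
      case True
      then have "(x t)^2 \<le> 1" using coord_sq_le[OF True, of x] x unfolding U_def by auto
      then have "\<bar>x t\<bar> \<le> 1" by (simp add: abs_square_le_1)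
      then show ?thesis using True by auto
    next
      case False then show ?thesis using x unfolding U_def by auto
    qed
    then show "x \<in> ?K" by (auto simp: PiE_iff)
  qed
  have cl: "closed U"
  proof -
    have c1: "closed {x::nat\<Rightarrow>real. \<forall>t. p \<le> t \<longrightarrow> x t = 0}"
    proof (intro closed_Collect_all)
      fix t
      show "closed {x::nat\<Rightarrow>real. p \<le> t \<longrightarrow> x t = 0}"
      proof (cases "p \<le> t")
        case True
        then show ?thesis using closed_Collect_eq[of "\<lambda>x::nat\<Rightarrow>real. x t" "\<lambda>_. 0"]
          by (simp add: continuous_intros)
      next
        case False then show ?thesis by simp
      qed
    qed
    have c2: "closed {x::nat\<Rightarrow>real. sqn {..<p} x = 1}"
      unfolding sqn_def by (rule closed_Collect_eq) (intro continuous_intros)+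
    have c3: "closed {x::nat\<Rightarrow>real. \<forall>a<k. inner_on {..<p} x (w a) = 0}"
      unfolding inner_on_def
      by (intro closed_Collect_all closed_Collect_imp closed_Collect_eq continuous_intros) auto
    have "U = {x. \<forall>t. p \<le> t \<longrightarrow> x t = 0} \<inter> {x. sqn {..<p} x = 1} \<inter> {x. \<forall>a<k. inner_on {..<p} x (w a) = 0}"
      unfolding U_def by auto
    then show ?thesis using c1 c2 c3 by (simp add: closed_Int)
  qed
  have "compact U"
  proof -
    have "U = ?K \<inter> U" using sub by auto
    then show ?thesis using compact_Int_closed[OF compact_box cl] by metis
  qed
  moreover have "continuous_on U (\<lambda>x. bf p L F x x)"
    unfolding bf_def phi_def by (intro continuous_intros)
  ultimately show ?thesis using continuous_attains_sup[OF _ ne] by blast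
qed

lemma inner_lin1: "inner_on I (\<lambda>t. x t + c * g t) y = inner_on I x y + c * inner_on I g y"
  unfolding inner_on_def by (simp add: algebra_simps sum.distrib sum_distrib_left)

lemma inner_div1: "inner_on I (\<lambda>t. x t / c) y = inner_on I x y / c"
  unfolding inner_on_def by (simp add: sum_divide_distrib)

lemma sqn_lin: "sqn I (\<lambda>t. x t + c * g t) = sqn I x + 2 * c * inner_on I x g + c^2 * sqn I g"
  unfolding sqn_def inner_on_def by (simp add: algebra_simps sum.distrib sum_distrib_left power2_eq_square)

lemma sqn_div: "sqn I (\<lambda>t. x t / c) = sqn I x / c^2"
  unfolding sqn_def by (simp add: sum_divide_distrib power_divide)

lemma eigen_max:
  fixes w :: "nat \<Rightarrow> nat \<Rightarrow> real" and p k :: nat and x :: "nat \<Rightarrow> real"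
  defines "U \<equiv> {x::nat\<Rightarrow>real. (\<forall>t. p \<le> t \<longrightarrow> x t = 0) \<and> sqn {..<p} x = 1 \<and> (\<forall>a<k. inner_on {..<p} x (w a) = 0)}"
  assumes xU: "x \<in> U" and mx: "\<forall>y\<in>U. bf p L F y y \<le> bf p L F x x"
    and wperp: "\<forall>a<k. bf p L F x (w a) = 0"
  shows "\<forall>y. bf p L F y x = bf p L F x x * inner_on {..<p} y x"
proof -
  define lam where "lam = bf p L F x x"
  define z where "z = (\<lambda>t. \<Sum>\<rho>\<in>L. F t \<rho> * phi p F x \<rho>)"
  have bfz: "bf p L F y x = inner_on {..<p} y z" for y unfolding z_def by (rule bf_as_inner)
  define g where "g = (\<lambda>t. if t < p then z t - lam * x t else 0)"
  have x0: "\<forall>t. p \<le> t \<longrightarrow> x t = 0" and x1: "sqn {..<p} x = 1"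
    and xw: "\<forall>a<k. inner_on {..<p} x (w a) = 0" using xU unfolding U_def by auto
  have ig: "inner_on {..<p} g y = inner_on {..<p} z y - lam * inner_on {..<p} x y" for y
    unfolding g_def inner_on_def by (simp add: algebra_simps sum_subtractf sum_distrib_left)
  have gw: "inner_on {..<p} g (w a) = 0" if a: "a < k" for a
  proof -
    have "inner_on {..<p} z (w a) = bf p L F (w a) x" using bfz[of "w a"] by (simp add: inner_sym)
    also have "\<dots> = 0" using wperp a bf_sym by metis
    finally show ?thesis using ig xw a by simp
  qed
  have gx: "inner_on {..<p} g x = 0"
    using ig[of x] bfz[of x] x1 by (simp add: inner_sym inner_self lam_def)
  have gz: "inner_on {..<p} g z = sqn {..<p} g"
  proof -
    have "inner_on {..<p} g z = inner_on {..<p} g (\<lambda>t. g t + lam * x t)"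
      by (rule inner_cong) (auto simp: g_def)
    also have "\<dots> = sqn {..<p} g + lam * inner_on {..<p} g x"
      by (subst inner_sym, subst inner_lin1) (simp add: inner_sym inner_self)
    finally show ?thesis using gx by simp
  qed
  have sg: "sqn {..<p} g = 0"
  proof (rule ccontr)
    assume "sqn {..<p} g \<noteq> 0"
    then have G: "sqn {..<p} g > 0" using sqn_nonneg[of "{..<p}" g] by linarith
    define G where "G = sqn {..<p} g"
    define Q where "Q = bf p L F g g"
    define K where "K = \<bar>lam * G - Q\<bar> + 1"
    define \<tau> where "\<tau> = G / K"
    have K: "K \<ge> 1" unfolding K_def by simp
    have tau: "\<tau> > 0" unfolding \<tau>_def using G K G_def by simp
    define xt where "xt = (\<lambda>t. x t + \<tau> * g t)"
    have sxt: "sqn {..<p} xt = 1 + \<tau>^2 * G"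
      unfolding xt_def sqn_lin using x1 gx by (simp add: inner_sym G_def)
    have sxt_pos: "sqn {..<p} xt > 0" using sxt G G_def by (simp add: add_pos_nonneg)
    define yt where "yt = (\<lambda>t. xt t / sqrt (sqn {..<p} xt))"
    have "yt \<in> U" unfolding U_def
    proof (intro CollectI conjI allI impI)
      fix t assume "p \<le> t" then show "yt t = 0" using x0 by (simp add: yt_def xt_def g_def)
    next
      show "sqn {..<p} yt = 1" unfolding yt_def sqn_div using sxt_pos by simp
    next
      fix a assume a: "a < k"
      show "inner_on {..<p} yt (w a) = 0"
        unfolding yt_def inner_div1 xt_def inner_lin1 using xw a gw by simp
    qed
    then have "bf p L F yt yt \<le> lam" using mx lam_def by auto
    moreover have "bf p L F yt yt = bf p L F xt xt / sqn {..<p} xt"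
      unfolding yt_def bf_scale using sxt_pos by simp
    ultimately have "bf p L F xt xt \<le> lam * sqn {..<p} xt"
      using sxt_pos by (simp add: divide_le_eq)
    moreover have "bf p L F xt xt = lam + 2 * \<tau> * G + \<tau>^2 * Q"
    proof -
      have "bf p L F x g = G" using bfz[of g] gz bf_sym G_def by metis
      then show ?thesis unfolding xt_def bf_lin Q_def lam_def by simp
    qed
    ultimately have "\<tau> * (2 * G) \<le> \<tau> * (\<tau> * (lam * G - Q))"
      using sxt by (simp add: algebra_simps power2_eq_square)
    then have "2 * G \<le> \<tau> * (lam * G - Q)" using tau by simp
    also have "\<dots> \<le> \<tau> * (K - 1)" using tau unfolding K_def by (intro mult_left_mono) auto
    also have "\<dots> = G * (K - 1) / K" unfolding \<tau>_def by simp
    also have "\<dots> \<le> G" using K G G_def by (simp add: divide_le_eq)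
    finally show False using G G_def by simp
  qed
  have zx: "z t = lam * x t" if "t < p" for t
    using sqn_zeroD[OF _ sg, of t] that by (simp add: g_def)
  show ?thesis
  proof
    fix y
    have "bf p L F y x = inner_on {..<p} y (\<lambda>t. lam * x t)"
      unfolding bfz by (rule inner_cong) (auto simp: zx)
    also have "\<dots> = lam * inner_on {..<p} y x" unfolding inner_on_def by (simp add: sum_distrib_left mult_ac)
    finally show "bf p L F y x = bf p L F x x * inner_on {..<p} y x" unfolding lam_def .
  qed
qed

lemma orth_square:
  fixes M :: "nat \<Rightarrow> nat \<Rightarrow> real"
  assumes "\<forall>a<s. \<forall>b<s. (\<Sum>j<s. M a j * M b j) = (if a = b then 1 else 0)"
  shows "\<forall>a<s. \<forall>b<s. (\<Sum>j<s. M j a * M j b) = (if a = b then 1 else 0)"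
proof -
  define A where "A = mat s s (\<lambda>(i,j). M i j)"
  define B where "B = transpose_mat A"
  have A: "A \<in> carrier_mat s s" and B: "B \<in> carrier_mat s s" unfolding A_def B_def by auto
  have "A * B = 1\<^sub>m s"
  proof (rule eq_matI)
    fix i j assume i: "i < dim_row (1\<^sub>m s :: real mat)" and j: "j < dim_col (1\<^sub>m s :: real mat)"
    then have "(A * B) $$ (i, j) = (\<Sum>k<s. M i k * M j k)"
      unfolding A_def B_def by (auto simp: scalar_prod_def atLeast0LessThan)
    also have "\<dots> = 1\<^sub>m s $$ (i, j)" using assms i j by auto
    finally show "(A * B) $$ (i, j) = 1\<^sub>m s $$ (i, j)" .
  qed (auto simp: A_def B_def)
  then have BA: "B * A = 1\<^sub>m s" using mat_mult_left_right_inverse[OF A B] by blast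
  show ?thesis
  proof (intro allI impI)
    fix a b assume a: "a < s" and b: "b < s"
    have "(\<Sum>j<s. M j a * M j b) = (B * A) $$ (a, b)"
      using a b unfolding A_def B_def by (auto simp: scalar_prod_def atLeast0LessThan)
    then show "(\<Sum>j<s. M j a * M j b) = (if a = b then 1 else 0)" using BA a b by auto
  qed
qed

lemma inspan_extend:
  assumes "inspan p k w f" "\<forall>a<k. w' a = w a"
  shows "inspan p (Suc k) w' f"
proof -
  obtain c where c: "\<forall>x<p. f x = (\<Sum>a<k. c a * w a x)" using assms(1) unfolding inspan_def by auto
  show ?thesis unfolding inspan_def
    by (rule exI[of _ "c(k := 0)"]) (use c assms(2) in simp)
qed

lemma inspan_cong:
  assumes "\<forall>t<p. f t = g t" "inspan p s q g"
  shows "inspan p s q f"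
  using assms unfolding inspan_def by auto

lemma inspan_sum:
  assumes fin: "finite L" and sp: "\<forall>\<rho>\<in>L. inspan p s q (G \<rho>)"
  shows "inspan p s q (\<lambda>t. \<Sum>\<rho>\<in>L. c \<rho> * G \<rho> t)"
proof -
  have "\<forall>\<rho>\<in>L. \<exists>d. \<forall>x<p. G \<rho> x = (\<Sum>j<s. d j * q j x)" using sp unfolding inspan_def by auto
  then obtain d where d: "\<forall>\<rho>\<in>L. \<forall>x<p. G \<rho> x = (\<Sum>j<s. d \<rho> j * q j x)" by metis
  show ?thesis unfolding inspan_def
  proof (intro exI allI impI)
    fix x assume x: "x < p"
    have "(\<Sum>\<rho>\<in>L. c \<rho> * G \<rho> x) = (\<Sum>\<rho>\<in>L. c \<rho> * (\<Sum>j<s. d \<rho> j * q j x))"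
      using d x by (intro sum.cong) auto
    also have "\<dots> = (\<Sum>j<s. (\<Sum>\<rho>\<in>L. c \<rho> * d \<rho> j) * q j x)"
      by (simp add: sum_distrib_left sum_distrib_right mult_ac, rule sum.swap)
    finally show "(\<Sum>\<rho>\<in>L. c \<rho> * G \<rho> x) = (\<Sum>j<s. (\<Sum>\<rho>\<in>L. c \<rho> * d \<rho> j) * q j x)" .
  qed
qed

lemma inner_lin2: "inner_on I y (\<lambda>t. x t + g t) = inner_on I y x + inner_on I y g"
  unfolding inner_on_def by (simp add: algebra_simps sum.distrib)

lemma iterate:
  fixes p :: nat and L :: "'l set" and F :: "nat \<Rightarrow> 'l \<Rightarrow> real"
  assumes fin: "finite L"
  shows "\<exists>w lam. onz p k w \<and> (\<forall>a<k. \<forall>y. bf p L F y (w a) = lam a * inner_on {..<p} y (w a)) \<and>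
     ((\<forall>\<rho>\<in>L. inspan p k w (\<lambda>t. F t \<rho>)) \<or> (\<forall>a<k. sqn {..<p} (w a) = 1 \<and> lam a > 0))"
proof (induction k)
  case 0
  show ?case by (rule exI[of _ "\<lambda>_ _. 0"], rule exI[of _ "\<lambda>_. 0"]) (simp add: onz_def)
next
  case (Suc k)
  then obtain w lam where onzw: "onz p k w"
    and eig: "\<forall>a<k. \<forall>y. bf p L F y (w a) = lam a * inner_on {..<p} y (w a)"
    and disj: "(\<forall>\<rho>\<in>L. inspan p k w (\<lambda>t. F t \<rho>)) \<or> (\<forall>a<k. sqn {..<p} (w a) = 1 \<and> lam a > 0)"
    by blast
  show ?case
  proof (cases "\<forall>\<rho>\<in>L. inspan p k w (\<lambda>t. F t \<rho>)")
    case True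
    define w' where "w' = w(k := (\<lambda>_. 0))"
    define lam' where "lam' = lam(k := 0)"
    have "onz p (Suc k) w'" unfolding onz_def
    proof (intro conjI allI impI)
      fix a assume a: "a < Suc k"
      show "sqn {..<p} (w' a) = 0 \<or> sqn {..<p} (w' a) = 1"
      proof (cases "a = k")
        case True then show ?thesis by (simp add: w'_def sqn_def)
      next
        case False then have "a < k" using a by simp
        then show ?thesis using onzw False unfolding onz_def w'_def by simp
      qed
    next
      fix a b assume a: "a < Suc k" and b: "b < Suc k" and ab: "a \<noteq> b"
      show "inner_on {..<p} (w' a) (w' b) = 0"
      proof (cases "a = k \<or> b = k")
        case True then show ?thesis by (auto simp: w'_def inner_on_def)
      next
        case False then have "a < k" "b < k" using a b by auto
        then show ?thesis using onzw ab False unfolding onz_def w'_def by simp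
      qed
    qed
    moreover have "\<forall>a<Suc k. \<forall>y. bf p L F y (w' a) = lam' a * inner_on {..<p} y (w' a)"
    proof (intro allI impI)
      fix a y assume a: "a < Suc k"
      show "bf p L F y (w' a) = lam' a * inner_on {..<p} y (w' a)"
      proof (cases "a = k")
        case True then show ?thesis by (simp add: w'_def lam'_def bf_def phi_zero)
      next
        case False then have "a < k" using a by simp
        then show ?thesis using eig False by (simp add: w'_def lam'_def)
      qed
    qed
    moreover have "\<forall>\<rho>\<in>L. inspan p (Suc k) w' (\<lambda>t. F t \<rho>)"
    proof
      fix \<rho> assume "\<rho> \<in> L"
      then have "inspan p k w (\<lambda>t. F t \<rho>)" using True by blast
      then show "inspan p (Suc k) w' (\<lambda>t. F t \<rho>)" by (rule inspan_extend) (simp add: w'_def)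
    qed
    ultimately show ?thesis by blast
  next
    case False
    then obtain \<rho>0 where r0: "\<rho>0 \<in> L" and nsp: "\<not> inspan p k w (\<lambda>t. F t \<rho>0)" by blast
    have unit: "\<forall>a<k. sqn {..<p} (w a) = 1 \<and> lam a > 0" using disj False by blast
    define f where "f = (\<lambda>t. F t \<rho>0)"
    define c where "c = (\<lambda>a. inner_on {..<p} f (w a))"
    define r where "r = (\<lambda>t. if t < p then f t - (\<Sum>a<k. c a * w a t) else 0)"
    have fr: "f t = r t + (\<Sum>a<k. c a * w a t)" if "t < p" for t using that by (simp add: r_def)
    have rperp: "inner_on {..<p} r (w a) = 0" if a: "a < k" for a
    proof -
      have "inner_on {..<p} f (w a) = inner_on {..<p} (\<lambda>t. r t + (\<Sum>b<k. c b * w b t)) (w a)"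
        using fr by (intro inner_cong) auto
      also have "\<dots> = inner_on {..<p} r (w a) + inner_on {..<p} (\<lambda>t. \<Sum>b<k. c b * w b t) (w a)"
        unfolding inner_on_def by (simp add: distrib_right sum.distrib)
      also have "inner_on {..<p} (\<lambda>t. \<Sum>b<k. c b * w b t) (w a) = (\<Sum>b<k. c b * inner_on {..<p} (w b) (w a))"
        by (rule inner_lincomb)
      also have "(\<Sum>b<k. c b * inner_on {..<p} (w b) (w a)) = (\<Sum>b<k. if b = a then c a else 0)"
        using onz_inner[OF onzw _ a] unit a by (intro sum.cong) auto
      also have "\<dots> = c a" using a by simp
      finally show ?thesis unfolding c_def by simp
    qed
    have rnz: "sqn {..<p} r \<noteq> 0"
    proof
      assume "sqn {..<p} r = 0"
      then have "\<forall>t<p. r t = 0" using sqn_zeroD[of "{..<p}" r] by auto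
      then have "inspan p k w f" unfolding inspan_def using fr by (intro exI[of _ c]) auto
      then show False using nsp unfolding f_def by simp
    qed
    then have rpos: "sqn {..<p} r > 0" using sqn_nonneg[of "{..<p}" r] by linarith
    have rf: "inner_on {..<p} r f = sqn {..<p} r"
    proof -
      have "inner_on {..<p} r f = inner_on {..<p} r (\<lambda>t. r t + (\<Sum>a<k. c a * w a t))"
        using fr by (intro inner_cong) auto
      also have "\<dots> = sqn {..<p} r + (\<Sum>a<k. c a * inner_on {..<p} (w a) r)"
        by (simp add: inner_lin2 inner_self) (subst inner_sym, simp add: inner_lincomb)
      also have "(\<Sum>a<k. c a * inner_on {..<p} (w a) r) = 0"
        using rperp by (simp add: inner_sym)
      finally show ?thesis by simp
    qed
    define U where "U = {x::nat\<Rightarrow>real. (\<forall>t. p \<le> t \<longrightarrow> x t = 0) \<and> sqn {..<p} x = 1 \<and> (\<forall>a<k. inner_on {..<p} x (w a) = 0)}"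
    define x0 where "x0 = (\<lambda>t. r t / sqrt (sqn {..<p} r))"
    have x0U: "x0 \<in> U" unfolding U_def
    proof (intro CollectI conjI allI impI)
      fix t assume "p \<le> t" then show "x0 t = 0" by (simp add: x0_def r_def)
    next
      show "sqn {..<p} x0 = 1" unfolding x0_def sqn_div using rpos by simp
    next
      fix a assume "a < k" then show "inner_on {..<p} x0 (w a) = 0"
        unfolding x0_def inner_div1 using rperp by simp
    qed
    then obtain x where xU: "x \<in> U" and mx: "\<forall>y\<in>U. bf p L F y y \<le> bf p L F x x"
      using max_exists[of p k w L F] unfolding U_def by blast
    have wperp: "\<forall>a<k. bf p L F x (w a) = 0" using eig xU unfolding U_def by auto
    have eigx: "\<forall>y. bf p L F y x = bf p L F x x * inner_on {..<p} y x"
      using eigen_max[of x p k w L F] xU mx wperp unfolding U_def by blast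
    have "phi p F x0 \<rho>0 = sqrt (sqn {..<p} r)"
    proof -
      have "phi p F x0 \<rho>0 = inner_on {..<p} x0 f" unfolding phi_def inner_on_def f_def by simp
      also have "\<dots> = sqn {..<p} r / sqrt (sqn {..<p} r)" unfolding x0_def inner_div1 rf ..
      also have "\<dots> = sqrt (sqn {..<p} r)" using rpos by (simp add: real_div_sqrt)
      finally show ?thesis .
    qed
    then have "bf p L F x0 x0 > 0" using bf_ge_term[OF fin r0, of p F x0] rpos
      by (smt (verit) real_sqrt_gt_zero zero_less_power)
    then have xpos: "bf p L F x x > 0" using mx x0U by fastforce
    define w' where "w' = w(k := x)"
    define lam' where "lam' = lam(k := bf p L F x x)"
    have "onz p (Suc k) w'"
      unfolding onz_def
    proof (intro conjI allI impI)
      fix a assume "a < Suc k"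
      then show "sqn {..<p} (w' a) = 0 \<or> sqn {..<p} (w' a) = 1"
      proof (cases "a = k")
        case True then show ?thesis using xU by (simp add: w'_def U_def)
      next
        case False then have "a < k" using \<open>a < Suc k\<close> by simp
        then show ?thesis using onzw False unfolding onz_def w'_def by simp
      qed
    next
      fix a b assume a: "a < Suc k" and b: "b < Suc k" and ab: "a \<noteq> b"
      show "inner_on {..<p} (w' a) (w' b) = 0"
      proof (cases "a = k")
        case True then have "b < k" using b ab by simp
        then show ?thesis using xU True ab by (simp add: w'_def U_def)
      next
        case False then have ak: "a < k" using a by simp
        show ?thesis
        proof (cases "b = k")
          case True then show ?thesis using xU ak False by (simp add: w'_def U_def inner_sym)
        next
          case False then have "b < k" using b by simp
          then show ?thesis using onzw ak ab \<open>a \<noteq> k\<close> False unfolding onz_def w'_def by simp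
        qed
      qed
    qed
    moreover have "\<forall>a<Suc k. \<forall>y. bf p L F y (w' a) = lam' a * inner_on {..<p} y (w' a)"
    proof (intro allI impI)
      fix a y assume a: "a < Suc k"
      show "bf p L F y (w' a) = lam' a * inner_on {..<p} y (w' a)"
      proof (cases "a = k")
        case True
        then have "w' a = x" "lam' a = bf p L F x x" by (simp_all add: w'_def lam'_def)
        then show ?thesis using eigx[rule_format, of y] by simp
      next
        case False then have "a < k" using a by simp
        then show ?thesis using eig False by (simp add: w'_def lam'_def)
      qed
    qed
    moreover have "\<forall>a<Suc k. sqn {..<p} (w' a) = 1 \<and> lam' a > 0"
    proof (intro allI impI)
      fix a assume a: "a < Suc k"
      show "sqn {..<p} (w' a) = 1 \<and> lam' a > 0"
      proof (cases "a = k")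
        case True then show ?thesis using xU xpos by (simp add: w'_def lam'_def U_def)
      next
        case False then have "a < k" using a by simp
        then show ?thesis using unit False by (simp add: w'_def lam'_def)
      qed
    qed
    ultimately show ?thesis by blast
  qed
qed

lemma sum_delta_mult:
  assumes "t < (p::nat)"
  shows "(\<Sum>u<p. (if u = t then (1::real) else 0) * g u) = g t"
proof -
  have "(\<Sum>u<p. (if u = t then (1::real) else 0) * g u) = (\<Sum>u<p. if u = t then g u else 0)"
    by (intro sum.cong) auto
  then show ?thesis using assms by simp
qed

lemma mode_lemma:
  fixes p s :: nat and L :: "'l set" and F :: "nat \<Rightarrow> 'l \<Rightarrow> real"
  assumes fin: "finite L" and sp: "\<forall>\<rho>\<in>L. inspan p s v (\<lambda>t. F t \<rho>)"
  shows "\<exists>w. onz p s w \<and> (\<forall>\<rho>\<in>L. inspan p s w (\<lambda>t. F t \<rho>)) \<and>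
     (\<forall>a<s. \<forall>b<s. a \<noteq> b \<longrightarrow> bf p L F (w a) (w b) = 0)"
proof -
  obtain q where onzq: "onz p s q" and vq: "\<forall>k<s. inspan p s q (v k)"
    using gram_schmidt_ex by blast
  have colq: "\<forall>\<rho>\<in>L. inspan p s q (\<lambda>t. F t \<rho>)" using sp vq inspan_mono_lincomb by blast
  obtain w lam where onzw: "onz p s w"
    and eig: "\<forall>a<s. \<forall>y. bf p L F y (w a) = lam a * inner_on {..<p} y (w a)"
    and disj: "(\<forall>\<rho>\<in>L. inspan p s w (\<lambda>t. F t \<rho>)) \<or> (\<forall>a<s. sqn {..<p} (w a) = 1 \<and> lam a > 0)"
    using iterate[OF fin, where p=p and F=F and k=s] by blast
  have orth: "\<forall>a<s. \<forall>b<s. a \<noteq> b \<longrightarrow> bf p L F (w a) (w b) = 0"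
    using eig onz_inner[OF onzw] by auto
  have span: "\<forall>\<rho>\<in>L. inspan p s w (\<lambda>t. F t \<rho>)"
  proof (cases "\<forall>\<rho>\<in>L. inspan p s w (\<lambda>t. F t \<rho>)")
    case True then show ?thesis .
  next
    case False
    then have unit: "\<forall>a<s. sqn {..<p} (w a) = 1 \<and> lam a > 0" using disj by blast
    have wq: "inspan p s q (w a)" if a: "a < s" for a
    proof -
      have "w a t = (\<Sum>\<rho>\<in>L. (phi p F (w a) \<rho> / lam a) * F t \<rho>)" if t: "t < p" for t
      proof -
        define e where "e = (\<lambda>u. if u = t then (1::real) else 0)"
        have pe: "phi p F e \<rho> = F t \<rho>" for \<rho>
          unfolding phi_def e_def using sum_delta_mult[OF t] .
        have ie: "inner_on {..<p} e (w a) = w a t"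
          unfolding inner_on_def e_def using sum_delta_mult[OF t] .
        have "bf p L F e (w a) = (\<Sum>\<rho>\<in>L. F t \<rho> * phi p F (w a) \<rho>)"
          unfolding bf_def pe ..
        then have "lam a * w a t = (\<Sum>\<rho>\<in>L. F t \<rho> * phi p F (w a) \<rho>)"
          using eig a ie by metis
        moreover have "lam a \<noteq> 0" using unit a by auto
        ultimately have "w a t = (\<Sum>\<rho>\<in>L. F t \<rho> * phi p F (w a) \<rho>) / lam a"
          by (simp add: nonzero_eq_divide_eq mult.commute)
        then show ?thesis by (simp add: sum_divide_distrib mult.commute)
      qed
      moreover have "inspan p s q (\<lambda>t. \<Sum>\<rho>\<in>L. (phi p F (w a) \<rho> / lam a) * F t \<rho>)"
        using inspan_sum[OF fin colq] .
      ultimately show ?thesis by (intro inspan_cong[of p "w a"]) auto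
    qed
    define M where "M = (\<lambda>a j. inner_on {..<p} (w a) (q j))"
    have wexp: "w a t = (\<Sum>j<s. M a j * q j t)" if "a < s" "t < p" for a t
      unfolding M_def using inspan_expand[OF onzq wq[OF that(1)] that(2)] .
    have MM: "\<forall>a<s. \<forall>b<s. (\<Sum>j<s. M a j * M b j) = (if a = b then 1 else 0)"
    proof (intro allI impI)
      fix a b assume a: "a < s" and b: "b < s"
      have "inner_on {..<p} (w a) (w b) = inner_on {..<p} (\<lambda>t. \<Sum>j<s. M a j * q j t) (w b)"
        using wexp a by (intro inner_cong) auto
      also have "\<dots> = (\<Sum>j<s. M a j * M b j)" unfolding inner_lincomb M_def by (simp add: inner_sym)
      finally show "(\<Sum>j<s. M a j * M b j) = (if a = b then 1 else 0)"
        using onz_inner[OF onzw a b] unit a by auto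
    qed
    have MtM: "\<forall>a<s. \<forall>b<s. (\<Sum>j<s. M j a * M j b) = (if a = b then 1 else 0)"
      using orth_square[OF MM] .
    have qw: "inspan p s w (q j)" if j: "j < s" for j
      unfolding inspan_def
    proof (intro exI[of _ "\<lambda>a. M a j"] allI impI)
      fix t assume t: "t < p"
      have "(\<Sum>a<s. M a j * w a t) = (\<Sum>a<s. M a j * (\<Sum>j'<s. M a j' * q j' t))"
        using wexp t by (intro sum.cong) auto
      also have "\<dots> = (\<Sum>j'<s. (\<Sum>a<s. M a j * M a j') * q j' t)"
        by (simp add: sum_distrib_left sum_distrib_right mult_ac, rule sum.swap)
      also have "\<dots> = (\<Sum>j'<s. if j = j' then q j' t else 0)"
        using MtM j by (intro sum.cong) auto
      also have "\<dots> = q j t" using j by simp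
      finally show "q j t = (\<Sum>a<s. M a j * w a t)" by simp
    qed
    show ?thesis using colq qw inspan_mono_lincomb by blast
  qed
  show ?thesis using onzw span orth by blast
qed

lemma tidx_len: "l \<in> tidx D P \<Longrightarrow> length l = D"
  unfolding tidx_def by auto

lemma prod_ind:
  "(\<Prod>i<(D::nat). if P i then (1::real) else 0) = (if \<forall>i<D. P i then 1 else 0)"
  by (induction D) (auto simp: less_Suc_eq)

lemma list_eq_tidx:
  assumes "l \<in> tidx D P" "l' \<in> tidx D P'"
  shows "l' = l \<longleftrightarrow> (\<forall>i<D. l' ! i = l ! i)"
  using assms tidx_len[OF assms(1)] tidx_len[OF assms(2)] by (auto intro: nth_equalityI)

lemma sum_delta_tidx:
  fixes T :: "nat list \<Rightarrow> real"
  assumes fin: "finite P" and l: "l \<in> tidx D P"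
  shows "(\<Sum>l'\<in>tidx D P. T l' * (\<Prod>i<D. if l' ! i = l ! i then 1 else 0)) = T l"
proof -
  have "(\<Sum>l'\<in>tidx D P. T l' * (\<Prod>i<D. if l' ! i = l ! i then 1 else 0)) =
        (\<Sum>l'\<in>tidx D P. if l' = l then T l' else 0)"
  proof (intro sum.cong refl)
    fix l' assume l': "l' \<in> tidx D P"
    have e: "(\<Prod>i<D. if l' ! i = l ! i then 1 else (0::real)) = (if l' = l then 1 else 0)"
      unfolding prod_ind using list_eq_tidx[OF l l'] by simp
    show "T l' * (\<Prod>i<D. if l' ! i = l ! i then 1 else 0) = (if l' = l then T l' else 0)" unfolding e by simp
  qed
  also have "\<dots> = T l" using l finite_tidx[OF fin] by simp
  finally show ?thesis .
qed

lemma eval_delta: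
  fixes T :: "nat list \<Rightarrow> real"
  assumes fin: "finite P" and l': "l' \<in> tidx D P" and j: "j < D"
  shows "(\<Sum>l\<in>tidx D P. T l * (\<Prod>k<D. if k \<noteq> j then (if l ! k = l' ! k then 1 else 0) else \<phi> (l ! k))) =
         (\<Sum>y\<in>P. T (l'[j := y]) * \<phi> y)"
proof -
  have c0: "l' ! j \<in> P" using l' j unfolding tidx_mem by auto
  let ?Z = "{l\<in>tidx D P. l ! j = l' ! j}"
  have "(\<Sum>l\<in>tidx D P. T l * (\<Prod>k<D. if k \<noteq> j then (if l ! k = l' ! k then 1 else 0) else \<phi> (l ! k))) =
     (\<Sum>l0\<in>?Z. \<Sum>y\<in>P. T (l0[j := y]) * (\<Prod>k<D. if k \<noteq> j then (if (l0[j := y]) ! k = l' ! k then 1 else 0) else \<phi> ((l0[j := y]) ! k)))"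
    by (rule sum_split_tidx[OF fin j c0])
  also have "\<dots> = (\<Sum>l0\<in>?Z. if l0 = l' then (\<Sum>y\<in>P. T (l'[j := y]) * \<phi> y) else 0)"
  proof (intro sum.cong refl)
    fix l0 assume l0: "l0 \<in> ?Z"
    have len0: "length l0 = D" using l0 tidx_len by auto
    have "(\<Prod>k<D. if k \<noteq> j then (if (l0[j := y]) ! k = l' ! k then 1 else 0) else \<phi> ((l0[j := y]) ! k)) =
          \<phi> y * (if l0 = l' then 1 else 0)" for y
    proof -
      have A: "(\<Prod>k<D. if k \<noteq> j then (if (l0[j := y]) ! k = l' ! k then 1 else 0) else \<phi> ((l0[j := y]) ! k)) =
            \<phi> y * (\<Prod>k\<in>{..<D} - {j}. if l0 ! k = l' ! k then 1 else 0)"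
        using j len0 by (simp add: prod_remove_nat[OF j])
      have B: "(\<Prod>k\<in>{..<D} - {j}. if l0 ! k = l' ! k then 1 else (0::real)) = (\<Prod>k<D. if l0 ! k = l' ! k then 1 else 0)"
        using l0 prod_remove_nat[OF j, of "\<lambda>k. if l0 ! k = l' ! k then 1 else (0::real)"] by simp
      have C: "(\<Prod>k<D. if l0 ! k = l' ! k then 1 else (0::real)) = (if l0 = l' then 1 else 0)"
        using list_eq_tidx[OF l', of l0 P] l0 unfolding prod_ind by simp
      show ?thesis using A B C by simp
    qed
    then show "(\<Sum>y\<in>P. T (l0[j := y]) * (\<Prod>k<D. if k \<noteq> j then (if (l0[j := y]) ! k = l' ! k then 1 else 0) else \<phi> ((l0[j := y]) ! k))) =
        (if l0 = l' then (\<Sum>y\<in>P. T (l'[j := y]) * \<phi> y) else 0)"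
      by (auto simp: mult_ac)
  qed
  also have "\<dots> = (\<Sum>y\<in>P. T (l'[j := y]) * \<phi> y)"
    using l' finite_tidx[OF fin] by simp
  finally show ?thesis .
qed

lemma recon:
  fixes T :: "nat list \<Rightarrow> real" and W :: "nat \<Rightarrow> nat \<Rightarrow> nat \<Rightarrow> real"
  assumes act: "\<forall>i<D. \<forall>l\<in>tidx D {..<p}. \<forall>x<p. (\<Sum>y<p. T (l[i := y]) * (\<Sum>k<s. W i k y * W i k x)) = T (l[i := x])"
    and l: "l \<in> tidx D {..<p}"
  shows "(\<Sum>ks\<in>tidx D {..<s}. (\<Sum>l'\<in>tidx D {..<p}. T l' * (\<Prod>i<D. W i (ks ! i) (l' ! i))) * (\<Prod>i<D. W i (ks ! i) (l ! i))) = T l"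
proof -
  have lp: "l ! i < p" if "i < D" for i using l that unfolding tidx_mem by auto
  have "(\<Sum>ks\<in>tidx D {..<s}. (\<Sum>l'\<in>tidx D {..<p}. T l' * (\<Prod>i<D. W i (ks ! i) (l' ! i))) * (\<Prod>i<D. W i (ks ! i) (l ! i)))
      = (\<Sum>ks\<in>tidx D {..<s}. \<Sum>l'\<in>tidx D {..<p}. T l' * (\<Prod>i<D. W i (ks ! i) (l' ! i) * W i (ks ! i) (l ! i)))"
    by (simp add: sum_distrib_right prod.distrib mult.assoc)
  also have "\<dots> = (\<Sum>l'\<in>tidx D {..<p}. T l' * (\<Sum>ks\<in>tidx D {..<s}. \<Prod>i<D. W i (ks ! i) (l' ! i) * W i (ks ! i) (l ! i)))"
    by (subst sum.swap) (simp add: sum_distrib_left)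
  also have "\<dots> = (\<Sum>l'\<in>tidx D {..<p}. T l' * (\<Prod>i<D. \<Sum>k<s. W i k (l' ! i) * W i k (l ! i)))"
    by (intro sum.cong refl arg_cong2[where f="(*)"] sum_prod_tidx) simp
  also have "\<dots> = (\<Sum>l'\<in>tidx D {..<p}. T l' * (\<Prod>k<D. if k \<in> {..<D} then (\<lambda>i y. \<Sum>k<s. W i k y * W i k (l ! i)) k (l' ! k) else (\<lambda>_ _. 0) k (l' ! k)))"
    by simp
  also have "\<dots> = (\<Sum>l'\<in>tidx D {..<p}. T l' * (\<Prod>k<D. if k \<in> {..<D} then (if l' ! k = l ! k then 1 else 0) else (\<lambda>_ _. 0) k (l' ! k)))"
    by (rule mp_replace) (use act lp in auto)
  also have "\<dots> = (\<Sum>l'\<in>tidx D {..<p}. T l' * (\<Prod>k<D. if l' ! k = l ! k then 1 else 0))"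
    by simp
  also have "\<dots> = T l" by (rule sum_delta_tidx) (use l in auto)
  finally show ?thesis .
qed

lemma H_upd_inv:
  "(\<Sum>t<p. x t * T ((l[j := y])[j := t])) = (\<Sum>t<p. x t * T (l[j := t]))"
  by simp

lemma core_final:
  fixes T :: "nat list \<Rightarrow> real" and wa wb :: "nat \<Rightarrow> real"
  assumes p: "0 < p" and j: "j < D"
    and bf0: "(\<Sum>l\<in>tidx D {..<p}. (\<Sum>y<p. wa y * T (l[j := y])) * (\<Sum>y<p. wb y * T (l[j := y]))) = 0"
  shows "(\<Sum>l\<in>tidx D {..<p}. T l * wb (l ! j) * (\<Sum>y<p. wa y * T (l[j := y]))) = 0"
proof -
  define H where "H x l = (\<Sum>y<p. x y * T (l[j := y]))" for x l
  let ?Z = "{l\<in>tidx D {..<p}. l ! j = 0}"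
  have fin: "finite {..<p}" by simp
  have c0: "(0::nat) \<in> {..<p}" using p by simp
  have len: "length l = D" if "l \<in> ?Z" for l using that tidx_len by blast
  have Hinv: "H x (l[j := y]) = H x l" for x l y unfolding H_def by simp
  have X: "(\<Sum>l\<in>tidx D {..<p}. T l * wb (l ! j) * H wa l) = (\<Sum>l0\<in>?Z. H wa l0 * H wb l0)"
  proof -
    have "(\<Sum>l\<in>tidx D {..<p}. T l * wb (l ! j) * H wa l) =
          (\<Sum>l0\<in>?Z. \<Sum>y<p. T (l0[j := y]) * wb ((l0[j := y]) ! j) * H wa (l0[j := y]))"
      by (rule sum_split_tidx[OF fin j c0])
    also have "\<dots> = (\<Sum>l0\<in>?Z. H wa l0 * H wb l0)"
    proof (intro sum.cong refl)
      fix l0 assume l0: "l0 \<in> ?Z"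
      have "(\<Sum>y<p. T (l0[j := y]) * wb ((l0[j := y]) ! j) * H wa (l0[j := y])) =
            (\<Sum>y<p. H wa l0 * (wb y * T (l0[j := y])))"
        using len[OF l0] j by (intro sum.cong refl) (simp add: Hinv mult_ac)
      also have "\<dots> = H wa l0 * H wb l0" unfolding H_def[of wb] by (simp add: sum_distrib_left)
      finally show "(\<Sum>y<p. T (l0[j := y]) * wb ((l0[j := y]) ! j) * H wa (l0[j := y])) = H wa l0 * H wb l0" .
    qed
    finally show ?thesis .
  qed
  have Y: "(\<Sum>l\<in>tidx D {..<p}. H wa l * H wb l) = real p * (\<Sum>l0\<in>?Z. H wa l0 * H wb l0)"
  proof -
    have "(\<Sum>l\<in>tidx D {..<p}. H wa l * H wb l) = (\<Sum>l0\<in>?Z. \<Sum>y<p. H wa (l0[j := y]) * H wb (l0[j := y]))"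
      by (rule sum_split_tidx[OF fin j c0])
    also have "\<dots> = (\<Sum>l0\<in>?Z. real p * (H wa l0 * H wb l0))" by (simp add: Hinv)
    finally show ?thesis by (simp add: sum_distrib_left)
  qed
  have "(\<Sum>l\<in>tidx D {..<p}. H wa l * H wb l) = 0" using bf0 unfolding H_def .
  then have "(\<Sum>l0\<in>?Z. H wa l0 * H wb l0) = 0" using Y p by simp
  then show ?thesis using X unfolding H_def by simp
qed

lemma core_orth:
  fixes T :: "nat list \<Rightarrow> real" and W :: "nat \<Rightarrow> nat \<Rightarrow> nat \<Rightarrow> real"
  assumes p: "0 < p"
    and act: "\<forall>i<D. \<forall>l\<in>tidx D {..<p}. \<forall>x<p. (\<Sum>y<p. T (l[i := y]) * (\<Sum>k<s. W i k y * W i k x)) = T (l[i := x])"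
    and j: "j < D" and a: "a < s" and b: "b < s"
    and bf0: "(\<Sum>l\<in>tidx D {..<p}. (\<Sum>y<p. W j a y * T (l[j := y])) * (\<Sum>y<p. W j b y * T (l[j := y]))) = 0"
  shows "(\<Sum>ks\<in>{ks\<in>tidx D {..<s}. ks ! j = a}.
           (\<Sum>l\<in>tidx D {..<p}. T l * (\<Prod>i<D. W i (ks ! i) (l ! i))) *
           (\<Sum>l\<in>tidx D {..<p}. T l * (\<Prod>i<D. W i ((ks[j := b]) ! i) (l ! i)))) = 0"
proof -
  let ?L = "tidx D {..<p}"
  let ?K = "tidx D {..<s}"
  have finK: "finite ?K" and finL: "finite ?L" by (simp_all add: finite_tidx)
  define f where "f l l' i k = (if i = j then (if k = a then W j a (l ! j) * W j b (l' ! j) else 0)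
      else W i k (l ! i) * W i k (l' ! i))" for l l' :: "nat list" and i k
  have pw: "(if ks ! j = a then (\<Prod>i<D. W i (ks ! i) (l ! i)) * (\<Prod>i<D. W i ((ks[j := b]) ! i) (l' ! i)) else 0)
        = (\<Prod>i<D. f l l' i (ks ! i))" if ks: "ks \<in> ?K" for ks l l'
  proof (cases "ks ! j = a")
    case True
    have len: "length ks = D" using ks tidx_len by blast
    have A: "(\<Prod>i<D. W i (ks ! i) (l ! i)) = W j a (l ! j) * (\<Prod>i\<in>{..<D}-{j}. W i (ks ! i) (l ! i))"
      using True by (simp add: prod_remove_nat[OF j])
    have B: "(\<Prod>i<D. W i ((ks[j := b]) ! i) (l' ! i)) = W j b (l' ! j) * (\<Prod>i\<in>{..<D}-{j}. W i (ks ! i) (l' ! i))"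
      using len j by (simp add: prod_remove_nat[OF j])
    have Cf: "(\<Prod>i<D. f l l' i (ks ! i)) = (W j a (l ! j) * W j b (l' ! j)) *
        (\<Prod>i\<in>{..<D}-{j}. W i (ks ! i) (l ! i) * W i (ks ! i) (l' ! i))"
      using True by (simp add: prod_remove_nat[OF j] f_def)
    show ?thesis using True A B Cf by (simp add: prod.distrib mult_ac)
  next
    case False
    then have "f l l' j (ks ! j) = 0" by (simp add: f_def)
    then have "(\<Prod>i<D. f l l' i (ks ! i)) = 0" using j by (intro prod_zero) auto
    then show ?thesis using False by simp
  qed
  have sf: "(\<Sum>k<s. f l l' i k) = (if i = j then W j a (l ! j) * W j b (l' ! j) else (\<Sum>k<s. W i k (l ! i) * W i k (l' ! i)))"
    for l l' i using a by (simp add: f_def)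
  define C where "C ks = (\<Sum>l\<in>?L. T l * (\<Prod>i<D. W i (ks ! i) (l ! i)))" for ks
  define C' where "C' ks = (\<Sum>l\<in>?L. T l * (\<Prod>i<D. W i ((ks[j := b]) ! i) (l ! i)))" for ks
  have step1: "(\<Sum>ks\<in>{ks\<in>?K. ks ! j = a}. C ks * C' ks) = (\<Sum>ks\<in>?K. if ks ! j = a then C ks * C' ks else 0)"
    using finK by (rule sum.inter_filter)
  have step2: "(if ks ! j = a then C ks * C' ks else 0) = (\<Sum>l\<in>?L. \<Sum>l'\<in>?L. T l * T l' * (\<Prod>i<D. f l l' i (ks ! i)))"
    if ks: "ks \<in> ?K" for ks
  proof -
    have "(if ks ! j = a then C ks * C' ks else 0) =
      (\<Sum>l\<in>?L. \<Sum>l'\<in>?L. T l * T l' * (if ks ! j = a then (\<Prod>i<D. W i (ks ! i) (l ! i)) * (\<Prod>i<D. W i ((ks[j := b]) ! i) (l' ! i)) else 0))"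
      unfolding C_def C'_def by (cases "ks ! j = a") (simp_all add: sum_product mult_ac)
    also have "\<dots> = (\<Sum>l\<in>?L. \<Sum>l'\<in>?L. T l * T l' * (\<Prod>i<D. f l l' i (ks ! i)))"
      using pw[OF ks] by simp
    finally show ?thesis .
  qed
  have "(\<Sum>ks\<in>?K. if ks ! j = a then C ks * C' ks else 0) =
        (\<Sum>ks\<in>?K. \<Sum>l\<in>?L. \<Sum>l'\<in>?L. T l * T l' * (\<Prod>i<D. f l l' i (ks ! i)))"
    using step2 by (intro sum.cong) auto
  also have "\<dots> = (\<Sum>l\<in>?L. \<Sum>l'\<in>?L. T l * T l' * (\<Sum>ks\<in>?K. \<Prod>i<D. f l l' i (ks ! i)))"
    by (subst sum.swap) (simp add: sum_distrib_left, subst sum.swap, rule refl)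
  also have "\<dots> = (\<Sum>l\<in>?L. \<Sum>l'\<in>?L. T l * T l' * (\<Prod>i<D. \<Sum>k<s. f l l' i k))"
    by (intro sum.cong refl arg_cong2[where f="(*)"] sum_prod_tidx) simp
  also have "\<dots> = (\<Sum>l'\<in>?L. T l' * (\<Sum>l\<in>?L. T l * (\<Prod>i<D. if i \<in> {..<D} - {j}
        then (\<lambda>i y. \<Sum>k<s. W i k y * W i k (l' ! i)) i (l ! i)
        else (\<lambda>i y. W j a y * W j b (l' ! j)) i (l ! i))))"
  proof -
    have pe: "(\<Prod>i<D. \<Sum>k<s. f l l' i k) = (\<Prod>i<D. if i \<in> {..<D} - {j}
        then (\<lambda>i y. \<Sum>k<s. W i k y * W i k (l' ! i)) i (l ! i)
        else (\<lambda>i y. W j a y * W j b (l' ! j)) i (l ! i))" for l l'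
      by (intro prod.cong refl) (auto simp: sf)
    have "(\<Sum>l\<in>?L. \<Sum>l'\<in>?L. T l * T l' * (\<Prod>i<D. \<Sum>k<s. f l l' i k)) =
      (\<Sum>l\<in>?L. \<Sum>l'\<in>?L. T l' * (T l * (\<Prod>i<D. if i \<in> {..<D} - {j}
        then (\<lambda>i y. \<Sum>k<s. W i k y * W i k (l' ! i)) i (l ! i)
        else (\<lambda>i y. W j a y * W j b (l' ! j)) i (l ! i))))"
      unfolding pe by (simp add: mult_ac)
    also have "\<dots> = (\<Sum>l'\<in>?L. \<Sum>l\<in>?L. T l' * (T l * (\<Prod>i<D. if i \<in> {..<D} - {j}
        then (\<lambda>i y. \<Sum>k<s. W i k y * W i k (l' ! i)) i (l ! i)
        else (\<lambda>i y. W j a y * W j b (l' ! j)) i (l ! i))))"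
      by (rule sum.swap)
    finally show ?thesis by (simp only: sum_distrib_left)
  qed
  also have "\<dots> = (\<Sum>l'\<in>?L. T l' * (\<Sum>l\<in>?L. T l * (\<Prod>i<D. if i \<in> {..<D} - {j}
        then (if l ! i = l' ! i then 1 else 0)
        else (\<lambda>i y. W j a y * W j b (l' ! j)) i (l ! i))))"
  proof (rule sum.cong[OF refl], rule arg_cong2[where f="(*)"], rule refl)
    fix l' assume l': "l' \<in> ?L"
    have lp: "l' ! i < p" if "i < D" for i using l' that unfolding tidx_mem by auto
    show "(\<Sum>l\<in>?L. T l * (\<Prod>i<D. if i \<in> {..<D} - {j}
        then (\<lambda>i y. \<Sum>k<s. W i k y * W i k (l' ! i)) i (l ! i)
        else (\<lambda>i y. W j a y * W j b (l' ! j)) i (l ! i))) =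
      (\<Sum>l\<in>?L. T l * (\<Prod>i<D. if i \<in> {..<D} - {j}
        then (if l ! i = l' ! i then 1 else 0)
        else (\<lambda>i y. W j a y * W j b (l' ! j)) i (l ! i)))"
      by (rule mp_replace) (use act lp in auto)
  qed
  also have "\<dots> = (\<Sum>l'\<in>?L. T l' * (\<Sum>y<p. T (l'[j := y]) * (W j a y * W j b (l' ! j))))"
  proof (rule sum.cong[OF refl], rule arg_cong2[where f="(*)"], rule refl)
    fix l' assume l': "l' \<in> ?L"
    have "(\<Sum>l\<in>?L. T l * (\<Prod>i<D. if i \<in> {..<D} - {j}
        then (if l ! i = l' ! i then 1 else 0)
        else (\<lambda>i y. W j a y * W j b (l' ! j)) i (l ! i))) =
      (\<Sum>l\<in>?L. T l * (\<Prod>i<D. if i \<noteq> j then (if l ! i = l' ! i then 1 else 0)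
        else (\<lambda>y. W j a y * W j b (l' ! j)) (l ! i)))"
      by (intro sum.cong refl arg_cong2[where f="(*)"] prod.cong) auto
    also have "\<dots> = (\<Sum>y\<in>{..<p}. T (l'[j := y]) * (W j a y * W j b (l' ! j)))"
      by (rule eval_delta[OF _ l' j]) simp
    finally show "(\<Sum>l\<in>?L. T l * (\<Prod>i<D. if i \<in> {..<D} - {j}
        then (if l ! i = l' ! i then 1 else 0)
        else (\<lambda>i y. W j a y * W j b (l' ! j)) i (l ! i))) =
      (\<Sum>y<p. T (l'[j := y]) * (W j a y * W j b (l' ! j)))" by simp
  qed
  also have "\<dots> = (\<Sum>l'\<in>?L. T l' * W j b (l' ! j) * (\<Sum>y<p. W j a y * T (l'[j := y])))"
    by (intro sum.cong refl) (simp add: sum_distrib_left sum_distrib_right mult_ac)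
  also have "\<dots> = 0" by (rule core_final[OF p j bf0])
  finally show ?thesis using step1 unfolding C_def C'_def by simp
qed

lemma hosvd:
  fixes T :: "nat list \<Rightarrow> real" and v :: "nat \<Rightarrow> nat \<Rightarrow> nat \<Rightarrow> real" and D p s :: nat
  assumes p: "0 < p" and fib: "\<forall>j<D. \<forall>l\<in>tidx D {..<p}. inspan p s (v j) (\<lambda>x. T (l[j := x]))"
  shows "\<exists>W C. (\<forall>j<D. onz p s (W j)) \<and>
     (\<forall>l\<in>tidx D {..<p}. T l = (\<Sum>ks\<in>tidx D {..<s}. C ks * (\<Prod>i<D. W i (ks ! i) (l ! i)))) \<and>
     sqn (tidx D {..<s}) C = sqn (tidx D {..<p}) T \<and>
     (\<forall>ks\<in>tidx D {..<s}. (\<exists>i<D. sqn {..<p} (W i (ks ! i)) = 0) \<longrightarrow> C ks = 0) \<and>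
     (\<forall>j<D. \<forall>a<s. \<forall>b<s. a \<noteq> b \<longrightarrow> (\<Sum>ks\<in>{ks\<in>tidx D {..<s}. ks ! j = a}. C ks * C (ks[j := b])) = 0)"
proof -
  let ?L = "tidx D {..<p}"
  let ?K = "tidx D {..<s}"
  have finL: "finite ?L" and finK: "finite ?K" by (simp_all add: finite_tidx)
  have ex: "\<forall>j. j < D \<longrightarrow> (\<exists>w. onz p s w \<and> (\<forall>l\<in>?L. inspan p s w (\<lambda>x. T (l[j := x]))) \<and>
      (\<forall>a<s. \<forall>b<s. a \<noteq> b \<longrightarrow> bf p ?L (\<lambda>x l. T (l[j := x])) (w a) (w b) = 0))"
  proof (intro allI impI)
    fix j assume j: "j < D"
    have "\<forall>\<rho>\<in>?L. inspan p s (v j) (\<lambda>t. (\<lambda>x l. T (l[j := x])) t \<rho>)" using fib j by simp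
    from mode_lemma[OF finL this] show "\<exists>w. onz p s w \<and> (\<forall>l\<in>?L. inspan p s w (\<lambda>x. T (l[j := x]))) \<and>
      (\<forall>a<s. \<forall>b<s. a \<noteq> b \<longrightarrow> bf p ?L (\<lambda>x l. T (l[j := x])) (w a) (w b) = 0)" by simp
  qed
  then obtain W where W: "\<forall>j. j < D \<longrightarrow> onz p s (W j) \<and> (\<forall>l\<in>?L. inspan p s (W j) (\<lambda>x. T (l[j := x]))) \<and>
      (\<forall>a<s. \<forall>b<s. a \<noteq> b \<longrightarrow> bf p ?L (\<lambda>x l. T (l[j := x])) (W j a) (W j b) = 0)"
    unfolding choice_iff' by blast
  have act: "\<forall>i<D. \<forall>l\<in>?L. \<forall>x<p. (\<Sum>y<p. T (l[i := y]) * (\<Sum>k<s. W i k y * W i k x)) = T (l[i := x])"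
  proof (intro allI impI ballI)
    fix i l x assume i: "i < D" and l: "l \<in> ?L" and x: "x < p"
    have "onz p s (W i)" "inspan p s (W i) (\<lambda>y. T (l[i := y]))" using W i l by auto
    from onz_action[OF this x] show "(\<Sum>y<p. T (l[i := y]) * (\<Sum>k<s. W i k y * W i k x)) = T (l[i := x])" .
  qed
  define C where "C ks = (\<Sum>l\<in>?L. T l * (\<Prod>i<D. W i (ks ! i) (l ! i)))" for ks
  have rec: "\<forall>l\<in>?L. T l = (\<Sum>ks\<in>?K. C ks * (\<Prod>i<D. W i (ks ! i) (l ! i)))"
    using recon[OF act] unfolding C_def by simp
  have pars: "sqn ?K C = sqn ?L T"
  proof -
    have "sqn ?K C = (\<Sum>ks\<in>?K. C ks * (\<Sum>l\<in>?L. T l * (\<Prod>i<D. W i (ks ! i) (l ! i))))"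
      unfolding sqn_def C_def by (simp add: power2_eq_square)
    also have "\<dots> = (\<Sum>l\<in>?L. T l * (\<Sum>ks\<in>?K. C ks * (\<Prod>i<D. W i (ks ! i) (l ! i))))"
      by (simp add: sum_distrib_left mult_ac, rule sum.swap)
    also have "\<dots> = (\<Sum>l\<in>?L. T l * T l)" using rec by (intro sum.cong) auto
    also have "\<dots> = sqn ?L T" unfolding sqn_def by (simp add: power2_eq_square)
    finally show ?thesis .
  qed
  have zero: "\<forall>ks\<in>?K. (\<exists>i<D. sqn {..<p} (W i (ks ! i)) = 0) \<longrightarrow> C ks = 0"
  proof (intro ballI impI)
    fix ks assume ks: "ks \<in> ?K" and "\<exists>i<D. sqn {..<p} (W i (ks ! i)) = 0"
    then obtain i where i: "i < D" and z: "sqn {..<p} (W i (ks ! i)) = 0" by blast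
    have prodz: "(\<Prod>i<D. W i (ks ! i) (l ! i)) = 0" if l: "l \<in> ?L" for l
    proof (rule prod_zero)
      have "l ! i < p" using l i unfolding tidx_mem by auto
      then have "W i (ks ! i) (l ! i) = 0" using sqn_zeroD[OF _ z] by simp
      then show "\<exists>a\<in>{..<D}. W a (ks ! a) (l ! a) = 0" using i by auto
    qed simp
    show "C ks = 0" unfolding C_def
    proof (rule sum.neutral, rule ballI)
      fix l assume "l \<in> ?L"
      show "T l * (\<Prod>i<D. W i (ks ! i) (l ! i)) = 0" by (simp only: prodz[OF \<open>l \<in> ?L\<close>] mult_zero_right)
    qed
  qed
  have orth: "\<forall>j<D. \<forall>a<s. \<forall>b<s. a \<noteq> b \<longrightarrow> (\<Sum>ks\<in>{ks\<in>?K. ks ! j = a}. C ks * C (ks[j := b])) = 0"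
  proof (intro allI impI)
    fix j a b assume j: "j < D" and a: "a < s" and b: "b < s" and ab: "a \<noteq> b"
    have "bf p ?L (\<lambda>x l. T (l[j := x])) (W j a) (W j b) = 0" using W j a b ab by auto
    then have bf0: "(\<Sum>l\<in>?L. (\<Sum>y<p. W j a y * T (l[j := y])) * (\<Sum>y<p. W j b y * T (l[j := y]))) = 0"
      unfolding bf_def phi_def by simp
    show "(\<Sum>ks\<in>{ks\<in>?K. ks ! j = a}. C ks * C (ks[j := b])) = 0"
      using core_orth[OF p act j a b bf0] unfolding C_def by simp
  qed
  show ?thesis
    apply (rule exI[of _ W], rule exI[of _ C])
    using W rec pars zero orth by blast
qed

lemma prod_abs_le1:
  fixes b :: "nat \<Rightarrow> real"
  assumes "\<forall>i\<in>I. \<bar>b i\<bar> \<le> 1"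
  shows "\<bar>prod b I\<bar> \<le> 1"
  unfolding abs_prod using assms by (intro prod_le_1) auto

lemma prod_perturb:
  fixes a b :: "nat \<Rightarrow> real"
  assumes fin: "finite I" and ab: "\<forall>i\<in>I. \<bar>a i - b i\<bar> \<le> \<epsilon> \<and> \<bar>b i\<bar> \<le> 1" and e: "\<epsilon> \<ge> 0"
  shows "\<bar>prod a I - prod b I\<bar> \<le> (1 + \<epsilon>) ^ card I - 1"
  using fin ab
proof (induction I rule: finite_induct)
  case empty
  then show ?case by simp
next
  case (insert x F)
  have IH: "\<bar>prod a F - prod b F\<bar> \<le> (1 + \<epsilon>) ^ card F - 1" using insert by auto
  have bF: "\<bar>prod b F\<bar> \<le> 1" using insert prod_abs_le1[of F b] by auto
  have ax: "\<bar>a x\<bar> \<le> 1 + \<epsilon>" and abx: "\<bar>a x - b x\<bar> \<le> \<epsilon>" using insert by (auto simp: abs_le_iff)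
  have "prod a (insert x F) - prod b (insert x F) = a x * (prod a F - prod b F) + (a x - b x) * prod b F"
    using insert by (simp add: algebra_simps)
  then have "\<bar>prod a (insert x F) - prod b (insert x F)\<bar> \<le> \<bar>a x\<bar> * \<bar>prod a F - prod b F\<bar> + \<bar>a x - b x\<bar> * \<bar>prod b F\<bar>"
    by (simp add: abs_mult[symmetric] abs_triangle_ineq)
  also have "\<dots> \<le> (1 + \<epsilon>) * ((1 + \<epsilon>) ^ card F - 1) + \<epsilon> * 1"
    by (intro add_mono mult_mono ax IH abx bF) (use e in auto)
  also have "\<dots> = (1 + \<epsilon>) ^ card (insert x F) - 1" using insert by (simp add: algebra_simps)
  finally show ?case .
qed

lemma amgm_abs: "\<bar>a\<bar> * \<bar>b\<bar> \<le> (a^2 + b^2) / (2::real)"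
proof -
  have "0 \<le> (\<bar>a\<bar> - \<bar>b\<bar>)^2" by simp
  also have "(\<bar>a\<bar> - \<bar>b\<bar>)^2 = a^2 + b^2 - 2 * (\<bar>a\<bar> * \<bar>b\<bar>)"
    by (simp add: power2_diff)
  finally show ?thesis by simp
qed

lemma cs_sum:
  fixes g :: "'a \<Rightarrow> real"
  assumes "finite A"
  shows "(\<Sum>x\<in>A. \<bar>g x\<bar>)^2 \<le> real (card A) * (\<Sum>x\<in>A. (g x)^2)"
proof -
  have "(\<Sum>x\<in>A. \<bar>g x\<bar>)^2 = (\<Sum>x\<in>A. \<Sum>y\<in>A. \<bar>g x\<bar> * \<bar>g y\<bar>)"
    by (simp add: power2_eq_square sum_product)
  also have "\<dots> \<le> (\<Sum>x\<in>A. \<Sum>y\<in>A. ((g x)^2 + (g y)^2) / 2)"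
    by (intro sum_mono amgm_abs)
  also have "\<dots> = real (card A) * (\<Sum>x\<in>A. (g x)^2)"
    by (simp add: add_divide_distrib sum.distrib sum_divide_distrib[symmetric] sum_distrib_left[symmetric])
  finally show ?thesis .
qed

lemma exp_pow_bound:
  fixes \<epsilon> :: real
  assumes e: "\<epsilon> \<ge> 0" and N: "real N * \<epsilon> \<le> 1"
  shows "(1 + \<epsilon>) ^ N - 1 \<le> 2 * real N * \<epsilon>"
proof -
  have "(1 + \<epsilon>) ^ N \<le> exp \<epsilon> ^ N" using e by (intro power_mono) (auto simp: exp_ge_add_one_self)
  also have "\<dots> = exp (real N * \<epsilon>)" by (simp add: exp_of_nat_mult)
  also have "\<dots> \<le> 1 + real N * \<epsilon> + (real N * \<epsilon>)^2" using e N by (intro exp_bound) auto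
  also have "(real N * \<epsilon>)^2 \<le> real N * \<epsilon>"
  proof -
    have "0 \<le> real N * \<epsilon>" using e by simp
    then show ?thesis using N by (simp add: power2_eq_square mult_le_cancel_left1 mult_left_le)
  qed
  finally show ?thesis by (simp add: mult_ac)
qed

lemma kron_inner:
  fixes u u' :: "nat \<Rightarrow> nat \<Rightarrow> real"
  assumes "finite P"
  shows "inner_on (tidx \<kappa> P) (\<lambda>c. \<Prod>j<\<kappa>. u j (c ! j)) (\<lambda>c. \<Prod>j<\<kappa>. u' j (c ! j)) = (\<Prod>j<\<kappa>. inner_on P (u j) (u' j))"
  unfolding inner_on_def using sum_prod_tidx[OF assms, where D=\<kappa> and f="\<lambda>j x. u j x * u' j x"]
  by (simp add: prod.distrib)

lemma kron_sqn:
  fixes u :: "nat \<Rightarrow> nat \<Rightarrow> real"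
  assumes "finite P"
  shows "sqn (tidx \<kappa> P) (\<lambda>c. \<Prod>j<\<kappa>. u j (c ! j)) = (\<Prod>j<\<kappa>. sqn P (u j))"
  using kron_inner[OF assms, of \<kappa> u u] by (simp add: inner_self)

lemma S1_sqn: "x \<in> S1 \<kappa> n \<Longrightarrow> sqn (tidx \<kappa> {..<n}) x = 1"
  unfolding S1_def using kron_sqn[of "{..<n}" \<kappa>] by auto

lemma lin_add: "lin_apply M C (\<lambda>c. x c + k * y c) l = lin_apply M C x l + k * lin_apply M C y l"
  unfolding lin_apply_def by (simp add: algebra_simps sum.distrib sum_distrib_left)

lemma lin_div: "lin_apply M C (\<lambda>c. x c / k) l = lin_apply M C x l / k"
  unfolding lin_apply_def by (simp add: sum_divide_distrib)

lemma lin_neg: "lin_apply M C (\<lambda>c. - x c) l = - lin_apply M C x l"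
  unfolding lin_apply_def by (simp add: sum_negf)

lemma S1_neg:
  assumes k: "\<kappa> \<ge> 1" and y: "y \<in> S1 \<kappa> n"
  shows "(\<lambda>c. - y c) \<in> S1 \<kappa> n"
proof -
  obtain u where yu: "y = (\<lambda>c. \<Prod>j<\<kappa>. u j (c ! j))" and un: "\<forall>j<\<kappa>. sqn {..<n} (u j) = 1"
    using y unfolding S1_def by auto
  define u' where "u' = u(0 := (\<lambda>t. - u 0 t))"
  have k0: "0 < \<kappa>" using k by simp
  have "(\<lambda>c. - y c) = (\<lambda>c. \<Prod>j<\<kappa>. u' j (c ! j))"
  proof
    fix c
    have "(\<Prod>j<\<kappa>. u' j (c ! j)) = u' 0 (c ! 0) * (\<Prod>j\<in>{..<\<kappa>} - {0}. u' j (c ! j))"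
      by (rule prod_remove_nat[OF k0])
    also have "(\<Prod>j\<in>{..<\<kappa>} - {0}. u' j (c ! j)) = (\<Prod>j\<in>{..<\<kappa>} - {0}. u j (c ! j))"
      unfolding u'_def by (intro prod.cong) auto
    also have "u' 0 (c ! 0) * (\<Prod>j\<in>{..<\<kappa>} - {0}. u j (c ! j)) = - (u 0 (c ! 0) * (\<Prod>j\<in>{..<\<kappa>} - {0}. u j (c ! j)))"
      unfolding u'_def by simp
    also have "u 0 (c ! 0) * (\<Prod>j\<in>{..<\<kappa>} - {0}. u j (c ! j)) = (\<Prod>j<\<kappa>. u j (c ! j))"
      by (rule prod_remove_nat[OF k0, symmetric])
    finally show "- y c = (\<Prod>j<\<kappa>. u' j (c ! j))" unfolding yu by simp
  qed
  moreover have "\<forall>j<\<kappa>. sqn {..<n} (u' j) = 1" using un unfolding u'_def sqn_def by auto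
  ultimately show ?thesis unfolding S1_def by blast
qed

lemma rip_pair:
  fixes M :: "nat \<Rightarrow> nat list \<Rightarrow> real" and \<kappa> n m :: nat
  defines "C \<equiv> tidx \<kappa> {..<n}"
  assumes rip: "rip C {..<m} (lin_apply M C) \<epsilon> (S12 \<kappa> n)"
    and x: "x \<in> S1 \<kappa> n" and y: "y \<in> S1 \<kappa> n" and xy: "inner_on C x y = 0"
  shows "2 * (1 - \<epsilon>) \<le> sqn {..<m} (\<lambda>l. lin_apply M C x l + lin_apply M C y l) \<and>
         sqn {..<m} (\<lambda>l. lin_apply M C x l + lin_apply M C y l) \<le> 2 * (1 + \<epsilon>)"
proof -
  have s2: "sqn C (\<lambda>c. x c + y c) = 2"
    using sqn_lin[of C x 1 y] S1_sqn[OF x] S1_sqn[OF y] xy unfolding C_def by simp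
  define sv where "sv = (\<lambda>c. (x c + y c) / sqrt (sqn C (\<lambda>c. x c + y c)))"
  have "sv \<in> S2 \<kappa> n" unfolding S2_def sv_def C_def using x y xy C_def by blast
  then have svS: "sv \<in> S12 \<kappa> n" unfolding S12_def by simp
  have ssv: "sqn C sv = 1" unfolding sv_def sqn_div s2 by simp
  have Lsv: "lin_apply M C sv = (\<lambda>l. (lin_apply M C x l + lin_apply M C y l) / sqrt 2)"
    unfolding sv_def s2 using lin_div[of M C "\<lambda>c. x c + y c"] lin_add[of M C x 1 y] by auto
  have "sqn {..<m} (lin_apply M C sv) = sqn {..<m} (\<lambda>l. lin_apply M C x l + lin_apply M C y l) / 2"
    unfolding Lsv sqn_div by simp
  moreover have "(1 - \<epsilon>) * sqn C sv \<le> sqn {..<m} (lin_apply M C sv) \<and> sqn {..<m} (lin_apply M C sv) \<le> (1 + \<epsilon>) * sqn C sv"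
    using rip svS unfolding rip_def by blast
  ultimately show ?thesis using ssv by simp
qed

lemma rip_inner:
  fixes M :: "nat \<Rightarrow> nat list \<Rightarrow> real" and \<kappa> n m :: nat
  defines "C \<equiv> tidx \<kappa> {..<n}"
  assumes rip: "rip C {..<m} (lin_apply M C) \<epsilon> (S12 \<kappa> n)" and k: "\<kappa> \<ge> 1"
    and x: "x \<in> S1 \<kappa> n" and y: "y \<in> S1 \<kappa> n" and xy: "inner_on C x y = 0"
  shows "\<bar>inner_on {..<m} (lin_apply M C x) (lin_apply M C y)\<bar> \<le> \<epsilon>"
proof -
  have ny: "(\<lambda>c. - y c) \<in> S1 \<kappa> n" by (rule S1_neg[OF k y])
  have xny: "inner_on C x (\<lambda>c. - y c) = 0" using xy unfolding inner_on_def by (simp add: sum_negf)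
  let ?A = "lin_apply M C x" and ?B = "lin_apply M C y"
  have p1: "2 * (1 - \<epsilon>) \<le> sqn {..<m} (\<lambda>l. ?A l + ?B l) \<and> sqn {..<m} (\<lambda>l. ?A l + ?B l) \<le> 2 * (1 + \<epsilon>)"
    using rip_pair[of \<kappa> n m M \<epsilon> x y] rip x y xy unfolding C_def by blast
  have p2': "2 * (1 - \<epsilon>) \<le> sqn {..<m} (\<lambda>l. ?A l + lin_apply M C (\<lambda>c. - y c) l) \<and>
      sqn {..<m} (\<lambda>l. ?A l + lin_apply M C (\<lambda>c. - y c) l) \<le> 2 * (1 + \<epsilon>)"
    using rip_pair[of \<kappa> n m M \<epsilon> x "\<lambda>c. - y c"] rip x ny xny unfolding C_def by blast
  have p2: "2 * (1 - \<epsilon>) \<le> sqn {..<m} (\<lambda>l. ?A l + (-1) * ?B l) \<and> sqn {..<m} (\<lambda>l. ?A l + (-1) * ?B l) \<le> 2 * (1 + \<epsilon>)"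
    using p2' by (simp add: lin_neg)
  have e1: "sqn {..<m} (\<lambda>l. ?A l + ?B l) = sqn {..<m} ?A + 2 * inner_on {..<m} ?A ?B + sqn {..<m} ?B"
    using sqn_lin[of "{..<m}" ?A 1 ?B] by simp
  have e2: "sqn {..<m} (\<lambda>l. ?A l + (-1) * ?B l) = sqn {..<m} ?A - 2 * inner_on {..<m} ?A ?B + sqn {..<m} ?B"
    using sqn_lin[of "{..<m}" ?A "-1" ?B] by simp
  show ?thesis using p1 p2 e1 e2 by (simp add: abs_le_iff)
qed

lemma rip_norm:
  fixes M :: "nat \<Rightarrow> nat list \<Rightarrow> real" and \<kappa> n m :: nat
  defines "C \<equiv> tidx \<kappa> {..<n}"
  assumes rip: "rip C {..<m} (lin_apply M C) \<epsilon> (S12 \<kappa> n)" and x: "x \<in> S1 \<kappa> n"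
  shows "\<bar>sqn {..<m} (lin_apply M C x) - 1\<bar> \<le> \<epsilon>"
proof -
  have "x \<in> S12 \<kappa> n" using x unfolding S12_def by simp
  then have "(1 - \<epsilon>) * sqn C x \<le> sqn {..<m} (lin_apply M C x) \<and> sqn {..<m} (lin_apply M C x) \<le> (1 + \<epsilon>) * sqn C x"
    using rip unfolding rip_def by blast
  then show ?thesis using S1_sqn[OF x] unfolding C_def by (simp add: abs_le_iff)
qed

lemma nth_concat_blocks:
  assumes "\<forall>js\<in>set jss. length js = \<kappa>" and "i < length jss" and "u < \<kappa>"
  shows "concat jss ! (i * \<kappa> + u) = jss ! i ! u"
  using assms
proof (induction jss arbitrary: i)
  case Nil then show ?case by simp
next
  case (Cons js jss)
  show ?case
  proof (cases i)
    case 0 then show ?thesis using Cons by (simp add: nth_append)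
  next
    case (Suc i')
    have "concat (js # jss) ! (i * \<kappa> + u) = concat jss ! (i' * \<kappa> + u)"
      using Cons Suc by (simp add: nth_append)
    then show ?thesis using Cons Suc by simp
  qed
qed

lemma length_concat_blocks:
  "\<forall>js\<in>set jss. length js = \<kappa> \<Longrightarrow> length (concat jss) = length jss * \<kappa>"
  by (induction jss) auto

lemma blocks_of_tidx:
  assumes "jss \<in> tidx d' (tidx \<kappa> P)"
  shows "\<forall>js\<in>set jss. length js = \<kappa>" "length jss = d'"
  using assms unfolding tidx_def by auto

lemma concat_tidx:
  assumes "jss \<in> tidx d' (tidx \<kappa> P)"
  shows "concat jss \<in> tidx (d' * \<kappa>) P"
  using assms length_concat_blocks[OF blocks_of_tidx(1)[OF assms]] blocks_of_tidx(2)[OF assms]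
  unfolding tidx_def by auto

lemma concat_nth:
  assumes "jss \<in> tidx d' (tidx \<kappa> P)" "i < d'" "u < \<kappa>"
  shows "concat jss ! (i * \<kappa> + u) = jss ! i ! u"
  using nth_concat_blocks[OF blocks_of_tidx(1)[OF assms(1)]] blocks_of_tidx(2)[OF assms(1)] assms by simp

lemma concat_bij:
  assumes k: "\<kappa> \<ge> 1"
  shows "bij_betw concat (tidx d' (tidx \<kappa> P)) (tidx (d' * \<kappa>) P)"
proof (rule bij_betw_imageI)
  show "inj_on concat (tidx d' (tidx \<kappa> P))"
  proof
    fix jss jss' assume a: "jss \<in> tidx d' (tidx \<kappa> P)" and b: "jss' \<in> tidx d' (tidx \<kappa> P)"
      and eq: "concat jss = concat jss'"
    have "jss ! i = jss' ! i" if i: "i < d'" for i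
    proof (rule nth_equalityI)
      have li: "length (jss ! i) = \<kappa>" "length (jss' ! i) = \<kappa>"
        using blocks_of_tidx[OF a] blocks_of_tidx[OF b] i nth_mem by auto
      show "length (jss ! i) = length (jss' ! i)" using li by simp
      fix u assume "u < length (jss ! i)"
      then have u: "u < \<kappa>" using li by simp
      show "jss ! i ! u = jss' ! i ! u"
        using concat_nth[OF a i u] concat_nth[OF b i u] eq by simp
    qed
    then show "jss = jss'" using a b unfolding tidx_def by (auto intro: nth_equalityI)
  qed
next
  show "concat ` tidx d' (tidx \<kappa> P) = tidx (d' * \<kappa>) P"
  proof (intro equalityI subsetI)
    fix l assume "l \<in> concat ` tidx d' (tidx \<kappa> P)"
    then show "l \<in> tidx (d' * \<kappa>) P" using concat_tidx by blast
  next
    fix l assume l: "l \<in> tidx (d' * \<kappa>) P"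
    have len: "length l = d' * \<kappa>" and lP: "set l \<subseteq> P" using l unfolding tidx_def by auto
    define jss where "jss = map (\<lambda>i. take \<kappa> (drop (i * \<kappa>) l)) [0..<d']"
    have blk: "length (take \<kappa> (drop (i * \<kappa>) l)) = \<kappa>" if "i < d'" for i
    proof -
      have "i * \<kappa> + \<kappa> \<le> d' * \<kappa>" using that by (metis add.commute mult_Suc less_eq_Suc_le mult_le_mono1)
      then show ?thesis using len by simp
    qed
    have jt: "jss \<in> tidx d' (tidx \<kappa> P)"
      unfolding tidx_def jss_def using blk lP
      by (auto dest: in_set_takeD in_set_dropD)
    have "concat jss = l"
    proof (rule nth_equalityI)
      show "length (concat jss) = length l"
        using length_concat_blocks[OF blocks_of_tidx(1)[OF jt]] blocks_of_tidx(2)[OF jt] len by simp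
      fix t assume "t < length (concat jss)"
      then have t: "t < d' * \<kappa>"
        using length_concat_blocks[OF blocks_of_tidx(1)[OF jt]] blocks_of_tidx(2)[OF jt] by simp
      have kp: "\<kappa> > 0" using k by simp
      have i: "t div \<kappa> < d'" using t kp by (simp add: div_less_iff_less_mult)
      have u: "t mod \<kappa> < \<kappa>" using kp by simp
      have tt: "t = t div \<kappa> * \<kappa> + t mod \<kappa>" by simp
      have "concat jss ! t = jss ! (t div \<kappa>) ! (t mod \<kappa>)"
        using concat_nth[OF jt i u] tt by simp
      also have "\<dots> = l ! (t div \<kappa> * \<kappa> + t mod \<kappa>)"
        unfolding jss_def using i u blk[OF i] len t by simp
      finally show "concat jss ! t = l ! t" using tt by simp
    qed
    then show "l \<in> concat ` tidx d' (tidx \<kappa> P)" using jt by blast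
  qed
qed

lemma prod_regroup:
  fixes h :: "nat \<Rightarrow> real"
  shows "(\<Prod>t<d' * \<kappa>. h t) = (\<Prod>i<d'. \<Prod>u<\<kappa>. h (i * \<kappa> + u))"
proof -
  have "(\<Prod>t<d' * \<kappa>. h t) = (\<Prod>i<d'. prod h {i * \<kappa>..<i * \<kappa> + \<kappa>})"
    by (rule prod.nat_group[symmetric])
  also have "\<dots> = (\<Prod>i<d'. \<Prod>u<\<kappa>. h (i * \<kappa> + u))"
  proof (rule prod.cong[OF refl])
    fix i
    have "prod h {i * \<kappa>..<i * \<kappa> + \<kappa>} = prod h {0 + i * \<kappa>..<\<kappa> + i * \<kappa>}" by (simp add: add.commute)
    also have "\<dots> = (\<Prod>u\<in>{0..<\<kappa>}. h (u + i * \<kappa>))" by (rule prod.shift_bounds_nat_ivl)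
    also have "\<dots> = (\<Prod>u<\<kappa>. h (i * \<kappa> + u))" by (simp add: atLeast0LessThan add.commute)
    finally show "prod h {i * \<kappa>..<i * \<kappa> + \<kappa>} = (\<Prod>u<\<kappa>. h (i * \<kappa> + u))" .
  qed
  finally show ?thesis .
qed

lemma fiber_span:
  fixes T :: "nat list \<Rightarrow> real" and H :: "'k list \<Rightarrow> real" and v :: "nat \<Rightarrow> 'k \<Rightarrow> nat \<Rightarrow> real"
  assumes finK: "finite K"
    and rep: "\<forall>l\<in>tidx D {..<p}. T l = (\<Sum>ks\<in>tidx D K. H ks * (\<Prod>i<D. v i (ks ! i) (l ! i)))"
    and j: "j < D" and l: "l \<in> tidx D {..<p}"
  shows "\<exists>c. \<forall>x<p. T (l[j := x]) = (\<Sum>k\<in>K. c k * v j k x)"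
proof -
  define c where "c k = (\<Sum>ks\<in>{ks\<in>tidx D K. ks ! j = k}. H ks * (\<Prod>i\<in>{..<D} - {j}. v i (ks ! i) (l ! i)))" for k
  have len: "length l = D" using l tidx_len by blast
  show ?thesis
  proof (intro exI allI impI)
    fix x assume x: "x < p"
    have lx: "l[j := x] \<in> tidx D {..<p}" using tidx_update[OF l] x by simp
    have "T (l[j := x]) = (\<Sum>ks\<in>tidx D K. H ks * (\<Prod>i<D. v i (ks ! i) ((l[j := x]) ! i)))"
      using rep lx by blast
    also have "\<dots> = (\<Sum>ks\<in>tidx D K. H ks * (\<Prod>i\<in>{..<D} - {j}. v i (ks ! i) (l ! i)) * v j (ks ! j) x)"
      using len j by (intro sum.cong refl) (simp add: prod_remove_nat[OF j] mult_ac)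
    also have "\<dots> = (\<Sum>k\<in>K. \<Sum>ks\<in>{ks\<in>tidx D K. ks ! j = k}. H ks * (\<Prod>i\<in>{..<D} - {j}. v i (ks ! i) (l ! i)) * v j (ks ! j) x)"
    proof (rule sum.group[symmetric])
      show "finite (tidx D K)" using finK by (simp add: finite_tidx)
      show "finite K" by (rule finK)
      show "(\<lambda>ks. ks ! j) ` tidx D K \<subseteq> K"
      proof
        fix y assume "y \<in> (\<lambda>ks. ks ! j) ` tidx D K"
        then obtain ks where ks: "ks \<in> tidx D K" and y: "y = ks ! j" by blast
        show "y \<in> K" using ks j y unfolding tidx_mem by blast
      qed
    qed
    also have "\<dots> = (\<Sum>k\<in>K. c k * v j k x)"
      unfolding c_def by (intro sum.cong refl) (simp add: sum_distrib_right)
    finally show "T (l[j := x]) = (\<Sum>k\<in>K. c k * v j k x)" .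
  qed
qed

lemma Y_rep:
  fixes d n \<kappa> r d' :: nat and X :: "nat list \<Rightarrow> real" and A :: "nat \<Rightarrow> nat \<Rightarrow> nat list \<Rightarrow> real"
  assumes k: "\<kappa> \<ge> 1" and n: "n \<ge> 1" and dd: "d = d' * \<kappa>" and hx: "hosvd_rank_le d n r X"
  shows "\<exists>q G'. (\<forall>t<d. onz n r (q t)) \<and> sqn (tidx d {..<r}) G' = sqn (tidx d {..<n}) X \<and>
     (\<forall>ks\<in>tidx d {..<r}. (\<exists>t<d. sqn {..<n} (q t (ks ! t)) = 0) \<longrightarrow> G' ks = 0) \<and>
     (\<forall>ls. multi_mode_prod d' (tidx \<kappa> {..<n}) A (reshape X) ls =
        (\<Sum>kss\<in>tidx d' (tidx \<kappa> {..<r}). G' (concat kss) *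
           (\<Prod>i<d'. lin_apply (A i) (tidx \<kappa> {..<n}) (\<lambda>c. \<Prod>u<\<kappa>. q (i * \<kappa> + u) (kss ! i ! u) (c ! u)) (ls ! i))))"
proof -
  obtain b G where rep: "\<forall>is\<in>tidx d {..<n}. X is = (\<Sum>ks\<in>tidx d {..<r}. G ks * (\<Prod>i<d. b i (ks ! i) (is ! i)))"
    using hx unfolding hosvd_rank_le_def by blast
  have fib: "\<forall>j<d. \<forall>l\<in>tidx d {..<n}. inspan n r (b j) (\<lambda>x. X (l[j := x]))"
    unfolding inspan_def using fiber_span[of "{..<r}" d n X G b] rep by auto
  obtain q G' where onzq: "\<forall>j<d. onz n r (q j)"
    and rec: "\<forall>l\<in>tidx d {..<n}. X l = (\<Sum>ks\<in>tidx d {..<r}. G' ks * (\<Prod>i<d. q i (ks ! i) (l ! i)))"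
    and pars: "sqn (tidx d {..<r}) G' = sqn (tidx d {..<n}) X"
    and zero: "\<forall>ks\<in>tidx d {..<r}. (\<exists>i<d. sqn {..<n} (q i (ks ! i)) = 0) \<longrightarrow> G' ks = 0"
    using hosvd[of n d r b X] n fib by auto
  let ?Cn = "tidx \<kappa> {..<n}" and ?Cr = "tidx \<kappa> {..<r}"
  define e where "e i a c = (\<Prod>u<\<kappa>. q (i * \<kappa> + u) (a ! u) (c ! u))" for i a c
  have Xc: "X (concat jss) = (\<Sum>kss\<in>tidx d' ?Cr. G' (concat kss) * (\<Prod>i<d'. e i (kss ! i) (jss ! i)))"
    if jss: "jss \<in> tidx d' ?Cn" for jss
  proof -
    have cj: "concat jss \<in> tidx d {..<n}" using concat_tidx[OF jss] dd by simp
    have "X (concat jss) = (\<Sum>ks\<in>tidx d {..<r}. G' ks * (\<Prod>t<d. q t (ks ! t) (concat jss ! t)))"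
      using rec cj by blast
    also have "\<dots> = (\<Sum>kss\<in>tidx d' ?Cr. G' (concat kss) * (\<Prod>t<d. q t (concat kss ! t) (concat jss ! t)))"
      using sum.reindex_bij_betw[OF concat_bij[OF k, of d' "{..<r}"], of "\<lambda>ks. G' ks * (\<Prod>t<d. q t (ks ! t) (concat jss ! t))"]
        dd by simp
    also have "\<dots> = (\<Sum>kss\<in>tidx d' ?Cr. G' (concat kss) * (\<Prod>i<d'. e i (kss ! i) (jss ! i)))"
    proof (rule sum.cong[OF refl])
      fix kss assume kss: "kss \<in> tidx d' ?Cr"
      have "(\<Prod>t<d. q t (concat kss ! t) (concat jss ! t)) = (\<Prod>i<d'. \<Prod>u<\<kappa>. q (i * \<kappa> + u) (concat kss ! (i * \<kappa> + u)) (concat jss ! (i * \<kappa> + u)))"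
        unfolding dd by (rule prod_regroup)
      also have "\<dots> = (\<Prod>i<d'. e i (kss ! i) (jss ! i))"
        unfolding e_def using concat_nth[OF kss] concat_nth[OF jss] by (intro prod.cong refl) auto
      finally show "G' (concat kss) * (\<Prod>t<d. q t (concat kss ! t) (concat jss ! t)) = G' (concat kss) * (\<Prod>i<d'. e i (kss ! i) (jss ! i))"
        by simp
    qed
    finally show ?thesis .
  qed
  have Yrep: "multi_mode_prod d' ?Cn A (reshape X) ls =
        (\<Sum>kss\<in>tidx d' ?Cr. G' (concat kss) * (\<Prod>i<d'. lin_apply (A i) ?Cn (e i (kss ! i)) (ls ! i)))" for ls
  proof -
    have finCn: "finite ?Cn" by (simp add: finite_tidx)
    have "multi_mode_prod d' ?Cn A (reshape X) ls = (\<Sum>jss\<in>tidx d' ?Cn. X (concat jss) * (\<Prod>i<d'. A i (ls ! i) (jss ! i)))"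
      unfolding multi_mode_prod_def reshape_def ..
    also have "\<dots> = (\<Sum>jss\<in>tidx d' ?Cn. \<Sum>kss\<in>tidx d' ?Cr. G' (concat kss) * (\<Prod>i<d'. A i (ls ! i) (jss ! i) * e i (kss ! i) (jss ! i)))"
      using Xc by (intro sum.cong refl) (simp add: sum_distrib_right sum_distrib_left prod.distrib mult_ac)
    also have "\<dots> = (\<Sum>kss\<in>tidx d' ?Cr. G' (concat kss) * (\<Sum>jss\<in>tidx d' ?Cn. \<Prod>i<d'. A i (ls ! i) (jss ! i) * e i (kss ! i) (jss ! i)))"
      by (subst sum.swap) (simp add: sum_distrib_left)
    also have "\<dots> = (\<Sum>kss\<in>tidx d' ?Cr. G' (concat kss) * (\<Prod>i<d'. \<Sum>c\<in>?Cn. A i (ls ! i) c * e i (kss ! i) c))"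
      by (intro sum.cong refl arg_cong2[where f="(*)"] sum_prod_tidx finCn)
    also have "\<dots> = (\<Sum>kss\<in>tidx d' ?Cr. G' (concat kss) * (\<Prod>i<d'. lin_apply (A i) ?Cn (e i (kss ! i)) (ls ! i)))"
      unfolding lin_apply_def ..
    finally show ?thesis .
  qed
  show ?thesis
    apply (rule exI[of _ q], rule exI[of _ G'])
    using onzq pars zero Yrep unfolding e_def by blast
qed

lemma gen_delta:
  fixes g :: "'a list \<Rightarrow> real"
  assumes fin: "finite P" and l: "l \<in> tidx D P"
  shows "(\<Sum>l'\<in>tidx D P. g l' * (\<Prod>i<D. if l ! i = l' ! i then 1 else 0)) = g l"
proof -
  have "(\<Sum>l'\<in>tidx D P. g l' * (\<Prod>i<D. if l ! i = l' ! i then 1 else 0)) = (\<Sum>l'\<in>tidx D P. if l' = l then g l' else 0)"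
  proof (rule sum.cong[OF refl])
    fix l' assume l': "l' \<in> tidx D P"
    have e: "(\<Prod>i<D. if l ! i = l' ! i then 1 else (0::real)) = (if l' = l then 1 else 0)"
      unfolding prod_ind using list_eq_tidx[OF l l'] by auto
    show "g l' * (\<Prod>i<D. if l ! i = l' ! i then 1 else 0) = (if l' = l then g l' else 0)" unfolding e by simp
  qed
  also have "\<dots> = g l" using l finite_tidx[OF fin] by simp
  finally show ?thesis .
qed

lemma Y_bound:
  fixes d n \<kappa> r d' m :: nat and \<epsilon> :: real and X :: "nat list \<Rightarrow> real" and A :: "nat \<Rightarrow> nat \<Rightarrow> nat list \<Rightarrow> real"
  assumes k: "\<kappa> \<ge> 1" and n: "n \<ge> 1" and dd: "d = d' * \<kappa>" and hx: "hosvd_rank_le d n r X"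
    and e0: "\<epsilon> \<ge> 0" and de: "real d' * \<epsilon> \<le> 1"
    and ripA: "\<forall>i<d'. rip (tidx \<kappa> {..<n}) {..<m} (lin_apply (A i) (tidx \<kappa> {..<n})) \<epsilon> (S12 \<kappa> n)"
  shows "\<bar>sqn (tidx d' {..<m}) (multi_mode_prod d' (tidx \<kappa> {..<n}) A (reshape X)) - sqn (tidx d {..<n}) X\<bar>
           \<le> 2 * real d' * \<epsilon> * real r ^ d * sqn (tidx d {..<n}) X \<and>
         (\<exists>g z. \<forall>ls. multi_mode_prod d' (tidx \<kappa> {..<n}) A (reshape X) ls =
            (\<Sum>kss\<in>tidx d' (tidx \<kappa> {..<r}). g kss * (\<Prod>i<d'. z i (kss ! i) (ls ! i))))"
proof -
  let ?Cn = "tidx \<kappa> {..<n}" and ?Cr = "tidx \<kappa> {..<r}"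
  let ?Kr = "tidx d' ?Cr" and ?Lm = "tidx d' {..<m}"
  let ?Y = "multi_mode_prod d' ?Cn A (reshape X)"
  obtain q G' where onzq: "\<forall>t<d. onz n r (q t)" and pars: "sqn (tidx d {..<r}) G' = sqn (tidx d {..<n}) X"
    and zero: "\<forall>ks\<in>tidx d {..<r}. (\<exists>t<d. sqn {..<n} (q t (ks ! t)) = 0) \<longrightarrow> G' ks = 0"
    and Yrep0: "\<forall>ls. ?Y ls = (\<Sum>kss\<in>?Kr. G' (concat kss) *
           (\<Prod>i<d'. lin_apply (A i) ?Cn (\<lambda>c. \<Prod>u<\<kappa>. q (i * \<kappa> + u) (kss ! i ! u) (c ! u)) (ls ! i)))"
    using Y_rep[OF k n dd hx, of A] by blast
  define g where "g kss = G' (concat kss)" for kss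
  define kr where "kr i a c = (\<Prod>u<\<kappa>. q (i * \<kappa> + u) (a ! u) (c ! u))" for i a c
  define z where "z i a = lin_apply (A i) ?Cn (kr i a)" for i a
  have Yrep: "\<forall>ls. ?Y ls = (\<Sum>kss\<in>?Kr. g kss * (\<Prod>i<d'. z i (kss ! i) (ls ! i)))"
    using Yrep0 unfolding g_def z_def kr_def by simp
  have finKr: "finite ?Kr" and finCr: "finite ?Cr" by (simp_all add: finite_tidx)
  have N1: "sqn ?Lm ?Y = (\<Sum>kss\<in>?Kr. \<Sum>kss'\<in>?Kr. g kss * g kss' * (\<Prod>i<d'. inner_on {..<m} (z i (kss ! i)) (z i (kss' ! i))))"
  proof -
    have "sqn ?Lm ?Y = (\<Sum>ls\<in>?Lm. \<Sum>kss\<in>?Kr. \<Sum>kss'\<in>?Kr. g kss * g kss' * (\<Prod>i<d'. z i (kss ! i) (ls ! i) * z i (kss' ! i) (ls ! i)))"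
      unfolding sqn_def using Yrep
      by (intro sum.cong refl) (simp add: power2_eq_square sum_product prod.distrib mult_ac)
    also have "\<dots> = (\<Sum>kss\<in>?Kr. \<Sum>kss'\<in>?Kr. g kss * g kss' * (\<Sum>ls\<in>?Lm. \<Prod>i<d'. z i (kss ! i) (ls ! i) * z i (kss' ! i) (ls ! i)))"
      by (subst sum.swap) (simp add: sum_distrib_left, subst sum.swap, rule refl)
    also have "\<dots> = (\<Sum>kss\<in>?Kr. \<Sum>kss'\<in>?Kr. g kss * g kss' * (\<Prod>i<d'. inner_on {..<m} (z i (kss ! i)) (z i (kss' ! i))))"
      unfolding inner_on_def by (intro sum.cong refl arg_cong2[where f="(*)"] sum_prod_tidx) simp
    finally show ?thesis .
  qed
  have N2: "sqn (tidx d {..<n}) X = (\<Sum>kss\<in>?Kr. \<Sum>kss'\<in>?Kr. g kss * g kss' * (\<Prod>i<d'. if kss ! i = kss' ! i then 1 else 0))"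
  proof -
    have "sqn (tidx d {..<n}) X = (\<Sum>ks\<in>tidx d {..<r}. (G' ks)^2)" using pars unfolding sqn_def by simp
    also have "\<dots> = (\<Sum>kss\<in>?Kr. (g kss)^2)"
      using sum.reindex_bij_betw[OF concat_bij[OF k, of d' "{..<r}"], of "\<lambda>ks. (G' ks)^2"] dd unfolding g_def by simp
    also have "\<dots> = (\<Sum>kss\<in>?Kr. g kss * (\<Sum>kss'\<in>?Kr. g kss' * (\<Prod>i<d'. if kss ! i = kss' ! i then 1 else 0)))"
      using gen_delta[OF finCr] by (intro sum.cong refl) (simp add: power2_eq_square)
    also have "\<dots> = (\<Sum>kss\<in>?Kr. \<Sum>kss'\<in>?Kr. g kss * g kss' * (\<Prod>i<d'. if kss ! i = kss' ! i then 1 else 0))"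
      by (simp add: sum_distrib_left mult_ac)
    finally show ?thesis .
  qed
  have cardKr: "card ?Kr = r ^ d"
    using card_tidx[OF finCr, of d'] card_tidx[of "{..<r}" \<kappa>] dd by (simp add: power_mult mult.commute)
  have unitq: "sqn {..<n} (q (i * \<kappa> + u) (kss ! i ! u)) = 1"
    if kss: "kss \<in> ?Kr" and gnz: "g kss \<noteq> 0" and i: "i < d'" and u: "u < \<kappa>" for kss i u
  proof -
    have ck: "concat kss \<in> tidx d {..<r}" using concat_tidx[OF kss] dd by simp
    have t: "i * \<kappa> + u < d"
    proof -
      have "i * \<kappa> + u < i * \<kappa> + \<kappa>" using u by simp
      also have "\<dots> \<le> d' * \<kappa>" using i by (metis add.commute mult_Suc less_eq_Suc_le mult_le_mono1)
      finally show ?thesis using dd by simp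
    qed
    have "sqn {..<n} (q (i * \<kappa> + u) (concat kss ! (i * \<kappa> + u))) \<noteq> 0"
      using zero ck gnz t unfolding g_def by blast
    moreover have "concat kss ! (i * \<kappa> + u) = kss ! i ! u" by (rule concat_nth[OF kss i u])
    moreover have "kss ! i ! u < r"
      using kss i u unfolding tidx_mem by auto
    ultimately show ?thesis using onzq t unfolding onz_def by auto
  qed
  have krS1: "kr i (kss ! i) \<in> S1 \<kappa> n" if kss: "kss \<in> ?Kr" and gnz: "g kss \<noteq> 0" and i: "i < d'" for kss i
    unfolding S1_def kr_def
    by (rule CollectI, rule exI[of _ "\<lambda>u. q (i * \<kappa> + u) (kss ! i ! u)"]) (use unitq[OF kss gnz i] in auto)
  have krinner: "inner_on ?Cn (kr i (kss ! i)) (kr i (kss' ! i)) = 0"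
    if kss: "kss \<in> ?Kr" and kss': "kss' \<in> ?Kr" and i: "i < d'" and ne: "kss ! i \<noteq> kss' ! i" for kss kss' i
  proof -
    have a: "kss ! i \<in> ?Cr" and a': "kss' ! i \<in> ?Cr" using kss kss' i unfolding tidx_mem by auto
    obtain u where u: "u < \<kappa>" and neu: "kss ! i ! u \<noteq> kss' ! i ! u"
      using list_eq_tidx[OF a a'] ne by auto
    have lt: "kss ! i ! u < r" "kss' ! i ! u < r" using a a' u unfolding tidx_mem by auto
    have t: "i * \<kappa> + u < d"
    proof -
      have "i * \<kappa> + u < i * \<kappa> + \<kappa>" using u by simp
      also have "\<dots> \<le> d' * \<kappa>" using i by (metis add.commute mult_Suc less_eq_Suc_le mult_le_mono1)
      finally show ?thesis using dd by simp
    qed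
    have "inner_on ?Cn (kr i (kss ! i)) (kr i (kss' ! i)) =
          (\<Prod>u<\<kappa>. inner_on {..<n} (q (i * \<kappa> + u) (kss ! i ! u)) (q (i * \<kappa> + u) (kss' ! i ! u)))"
      unfolding kr_def by (rule kron_inner) simp
    also have "\<dots> = 0"
    proof (rule prod_zero)
      have "inner_on {..<n} (q (i * \<kappa> + u) (kss ! i ! u)) (q (i * \<kappa> + u) (kss' ! i ! u)) = 0"
        using onz_inner[of n r "q (i * \<kappa> + u)", OF _ lt] onzq t neu by auto
      then show "\<exists>a\<in>{..<\<kappa>}. inner_on {..<n} (q (i * \<kappa> + a) (kss ! i ! a)) (q (i * \<kappa> + a) (kss' ! i ! a)) = 0"
        using u by auto
    qed simp
    finally show ?thesis .
  qed
  have cond: "\<forall>i\<in>{..<d'}. \<bar>inner_on {..<m} (z i (kss ! i)) (z i (kss' ! i)) - (if kss ! i = kss' ! i then 1 else 0)\<bar> \<le> \<epsilon>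
      \<and> \<bar>(if kss ! i = kss' ! i then 1 else 0::real)\<bar> \<le> 1"
    if kss: "kss \<in> ?Kr" and kss': "kss' \<in> ?Kr" and g1: "g kss \<noteq> 0" and g2: "g kss' \<noteq> 0" for kss kss'
  proof
    fix i assume "i \<in> {..<d'}"
    then have i: "i < d'" by simp
    have rp: "rip ?Cn {..<m} (lin_apply (A i) ?Cn) \<epsilon> (S12 \<kappa> n)" using ripA i by blast
    show "\<bar>inner_on {..<m} (z i (kss ! i)) (z i (kss' ! i)) - (if kss ! i = kss' ! i then 1 else 0)\<bar> \<le> \<epsilon>
      \<and> \<bar>(if kss ! i = kss' ! i then 1 else 0::real)\<bar> \<le> 1"
    proof (cases "kss ! i = kss' ! i")
      case True
      have "\<bar>sqn {..<m} (z i (kss ! i)) - 1\<bar> \<le> \<epsilon>"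
        unfolding z_def by (rule rip_norm[OF rp krS1[OF kss g1 i]])
      then show ?thesis using True by (simp add: inner_self)
    next
      case False
      have "\<bar>inner_on {..<m} (z i (kss ! i)) (z i (kss' ! i))\<bar> \<le> \<epsilon>"
        unfolding z_def by (rule rip_inner[OF rp k krS1[OF kss g1 i] krS1[OF kss' g2 i] krinner[OF kss kss' i False]])
      then show ?thesis using False by simp
    qed
  qed
  define E where "E = (1 + \<epsilon>) ^ d' - 1"
  have E0: "E \<ge> 0" unfolding E_def using e0 by (simp add: one_le_power)
  have termb: "\<bar>g kss * g kss' * ((\<Prod>i<d'. inner_on {..<m} (z i (kss ! i)) (z i (kss' ! i))) - (\<Prod>i<d'. if kss ! i = kss' ! i then 1 else 0))\<bar>
      \<le> \<bar>g kss\<bar> * \<bar>g kss'\<bar> * E" if kss: "kss \<in> ?Kr" and kss': "kss' \<in> ?Kr" for kss kss'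
  proof (cases "g kss = 0 \<or> g kss' = 0")
    case True then show ?thesis using E0 by auto
  next
    case False
    have "\<bar>(\<Prod>i<d'. inner_on {..<m} (z i (kss ! i)) (z i (kss' ! i))) - (\<Prod>i<d'. if kss ! i = kss' ! i then 1 else 0)\<bar> \<le> E"
      unfolding E_def using prod_perturb[OF _ cond[OF kss kss'] e0] False by simp
    then show ?thesis by (simp add: abs_mult mult_left_mono)
  qed
  have "\<bar>sqn ?Lm ?Y - sqn (tidx d {..<n}) X\<bar> =
      \<bar>\<Sum>kss\<in>?Kr. \<Sum>kss'\<in>?Kr. g kss * g kss' * ((\<Prod>i<d'. inner_on {..<m} (z i (kss ! i)) (z i (kss' ! i))) - (\<Prod>i<d'. if kss ! i = kss' ! i then 1 else 0))\<bar>"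
    unfolding N1 N2 by (simp add: sum_subtractf right_diff_distrib)
  also have "\<dots> \<le> (\<Sum>kss\<in>?Kr. \<Sum>kss'\<in>?Kr. \<bar>g kss * g kss' * ((\<Prod>i<d'. inner_on {..<m} (z i (kss ! i)) (z i (kss' ! i))) - (\<Prod>i<d'. if kss ! i = kss' ! i then 1 else 0))\<bar>)"
    by (rule order_trans[OF sum_abs sum_mono]) (rule sum_abs)
  also have "\<dots> \<le> (\<Sum>kss\<in>?Kr. \<Sum>kss'\<in>?Kr. \<bar>g kss\<bar> * \<bar>g kss'\<bar> * E)"
    using termb by (intro sum_mono) auto
  also have "\<dots> = E * (\<Sum>kss\<in>?Kr. \<bar>g kss\<bar>)^2"
    by (simp add: power2_eq_square sum_product sum_distrib_left mult_ac)
  also have "\<dots> \<le> E * (real (card ?Kr) * (\<Sum>kss\<in>?Kr. (g kss)^2))"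
    using E0 cs_sum[OF finKr, of g] by (rule mult_left_mono[rotated])
  also have "(\<Sum>kss\<in>?Kr. (g kss)^2) = sqn (tidx d {..<n}) X"
  proof -
    have "sqn (tidx d {..<n}) X = (\<Sum>ks\<in>tidx d {..<r}. (G' ks)^2)" using pars unfolding sqn_def by simp
    also have "\<dots> = (\<Sum>kss\<in>?Kr. (g kss)^2)"
      using sum.reindex_bij_betw[OF concat_bij[OF k, of d' "{..<r}"], of "\<lambda>ks. (G' ks)^2"] dd unfolding g_def by simp
    finally show ?thesis by simp
  qed
  also have "E * (real (card ?Kr) * sqn (tidx d {..<n}) X) = E * (real r ^ d * sqn (tidx d {..<n}) X)"
    by (simp add: cardKr)
  also have "\<dots> \<le> (2 * real d' * \<epsilon>) * (real r ^ d * sqn (tidx d {..<n}) X)"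
  proof (rule mult_right_mono)
    show "E \<le> 2 * real d' * \<epsilon>" unfolding E_def by (rule exp_pow_bound[OF e0 de])
    show "0 \<le> real r ^ d * sqn (tidx d {..<n}) X" using sqn_nonneg[of "tidx d {..<n}" X] by simp
  qed
  finally have bound: "\<bar>sqn ?Lm ?Y - sqn (tidx d {..<n}) X\<bar> \<le> 2 * real d' * \<epsilon> * real r ^ d * sqn (tidx d {..<n}) X"
    by (simp add: mult_ac cardKr)
  show ?thesis using bound Yrep by blast
qed

lemma A2_bound:
  fixes d' m m2 r \<kappa> :: nat and \<epsilon> \<delta> :: real and Y :: "nat list \<Rightarrow> real" and A2 :: "nat \<Rightarrow> nat list \<Rightarrow> real"
    and g :: "nat list list \<Rightarrow> real" and z :: "nat \<Rightarrow> nat list \<Rightarrow> nat \<Rightarrow> real"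
  assumes d'1: "d' \<ge> 1" and e0: "\<epsilon> \<ge> 0" and \<delta>0: "\<delta> \<ge> 0"
    and rep: "\<forall>ls. Y ls = (\<Sum>kss\<in>tidx d' (tidx \<kappa> {..<r}). g kss * (\<Prod>i<d'. z i (kss ! i) (ls ! i)))"
    and ripB: "rip (tidx d' {..<m}) {..<m2} (lin_apply A2 (tidx d' {..<m})) (\<delta> / 3)
           (nearly_orth d' m (r ^ \<kappa>) (1 + \<epsilon>) \<epsilon> (1 - \<delta> / 3))"
  shows "(1 - \<delta> / 3) * sqn (tidx d' {..<m}) Y \<le> sqn {..<m2} (lin_apply A2 (tidx d' {..<m}) Y) \<and>
         sqn {..<m2} (lin_apply A2 (tidx d' {..<m}) Y) \<le> (1 + \<delta> / 3) * sqn (tidx d' {..<m}) Y"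
proof -
  let ?Lm = "tidx d' {..<m}" and ?K = "tidx \<kappa> {..<r}"
  have finLm: "finite ?Lm" by (simp add: finite_tidx)
  let ?SY = "sqn ?Lm Y"
  show ?thesis
  proof (cases "?SY = 0")
    case True
    have "\<forall>c\<in>?Lm. Y c = 0" using sqn_zeroD[OF finLm True] by blast
    then have "lin_apply A2 ?Lm Y = (\<lambda>_. 0)" unfolding lin_apply_def by (intro ext sum.neutral) auto
    then show ?thesis using True by (simp add: sqn_def)
  next
    case False
    then have SY: "?SY > 0" using sqn_nonneg[of ?Lm Y] by linarith
    have m0: "0 < m"
    proof (rule ccontr)
      assume "\<not> 0 < m"
      then have "?Lm = {}" using d'1 unfolding tidx_def by (auto simp: length_0_conv)
      then show False using False by (simp add: sqn_def)
    qed
    define Yh where "Yh ls = Y ls / sqrt ?SY" for ls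
    have sYh: "sqn ?Lm Yh = 1" unfolding Yh_def sqn_div using SY by simp
    have finK: "finite ?K" by (simp add: finite_tidx)
    obtain eb where eb: "bij_betw eb {0..<card ?K} ?K" using ex_bij_betw_nat_finite[OF finK] by blast
    have cardK: "card ?K = r ^ \<kappa>" using card_tidx[of "{..<r}" \<kappa>] by simp
    have repH: "\<forall>ls\<in>?Lm. Yh ls = (\<Sum>kss\<in>tidx d' ?K. (g kss / sqrt ?SY) * (\<Prod>i<d'. z i (kss ! i) (ls ! i)))"
      unfolding Yh_def using rep by (simp add: sum_divide_distrib mult_ac)
    have fib: "\<forall>j<d'. \<forall>ls\<in>?Lm. inspan m (r ^ \<kappa>) (\<lambda>t. z j (eb t)) (\<lambda>x. Yh (ls[j := x]))"
    proof (intro allI impI ballI)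
      fix j ls assume j: "j < d'" and ls: "ls \<in> ?Lm"
      obtain c where c: "\<forall>x<m. Yh (ls[j := x]) = (\<Sum>k\<in>?K. c k * z j k x)"
        using fiber_span[OF finK repH j ls] by blast
      show "inspan m (r ^ \<kappa>) (\<lambda>t. z j (eb t)) (\<lambda>x. Yh (ls[j := x]))"
        unfolding inspan_def
      proof (intro exI[of _ "\<lambda>t. c (eb t)"] allI impI)
        fix x assume x: "x < m"
        have "(\<Sum>k\<in>?K. c k * z j k x) = (\<Sum>t\<in>{0..<card ?K}. c (eb t) * z j (eb t) x)"
          using sum.reindex_bij_betw[OF eb, of "\<lambda>k. c k * z j k x"] by simp
        then show "Yh (ls[j := x]) = (\<Sum>t<r ^ \<kappa>. c (eb t) * z j (eb t) x)"
          using c x cardK by (simp add: atLeast0LessThan)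
      qed
    qed
    obtain W C where onzW: "\<forall>j<d'. onz m (r ^ \<kappa>) (W j)"
      and rec: "\<forall>l\<in>?Lm. Yh l = (\<Sum>ks\<in>tidx d' {..<r ^ \<kappa>}. C ks * (\<Prod>i<d'. W i (ks ! i) (l ! i)))"
      and pars: "sqn (tidx d' {..<r ^ \<kappa>}) C = sqn ?Lm Yh"
      and orth: "\<forall>j<d'. \<forall>a<r ^ \<kappa>. \<forall>b<r ^ \<kappa>. a \<noteq> b \<longrightarrow>
          (\<Sum>ks\<in>{ks\<in>tidx d' {..<r ^ \<kappa>}. ks ! j = a}. C ks * C (ks[j := b])) = 0"
      using hosvd[OF m0 fib] by blast
    have "Yh \<in> nearly_orth d' m (r ^ \<kappa>) (1 + \<epsilon>) \<epsilon> (1 - \<delta> / 3)"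
      unfolding nearly_orth_def
    proof (intro CollectI exI conjI)
      show "\<forall>ls\<in>?Lm. Yh ls = (\<Sum>ks\<in>tidx d' {..<r ^ \<kappa>}. C ks * (\<Prod>i<d'. W i (ks ! i) (ls ! i)))" by (rule rec)
      show "\<forall>i<d'. \<forall>k<r ^ \<kappa>. sqrt (sqn {..<m} (W i k)) \<le> 1 + \<epsilon>"
      proof (intro allI impI)
        fix i k assume "i < d'" "k < r ^ \<kappa>"
        then have "sqn {..<m} (W i k) = 0 \<or> sqn {..<m} (W i k) = 1" using onzW unfolding onz_def by blast
        then show "sqrt (sqn {..<m} (W i k)) \<le> 1 + \<epsilon>" using e0 by auto
      qed
      show "\<forall>i<d'. \<forall>k<r ^ \<kappa>. \<forall>k'<r ^ \<kappa>. k \<noteq> k' \<longrightarrow> \<bar>inner_on {..<m} (W i k) (W i k')\<bar> \<le> \<epsilon>"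
        using onzW e0 unfolding onz_def by auto
      show "sqrt (sqn (tidx d' {..<r ^ \<kappa>}) C) = 1" using pars sYh by simp
      show "\<forall>i<d'. \<forall>a<r ^ \<kappa>. \<forall>b<r ^ \<kappa>. a \<noteq> b \<longrightarrow>
          (\<Sum>ks\<in>{ks\<in>tidx d' {..<r ^ \<kappa>}. ks ! i = a}. C ks * C (ks[i := b])) = 0" by (rule orth)
      show "1 - \<delta> / 3 \<le> sqrt (sqn ?Lm Yh)" using sYh \<delta>0 by simp
    qed
    then have rb: "(1 - \<delta> / 3) * sqn ?Lm Yh \<le> sqn {..<m2} (lin_apply A2 ?Lm Yh) \<and>
        sqn {..<m2} (lin_apply A2 ?Lm Yh) \<le> (1 + \<delta> / 3) * sqn ?Lm Yh"
      using ripB unfolding rip_def by blast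
    have "lin_apply A2 ?Lm Yh = (\<lambda>l. lin_apply A2 ?Lm Y l / sqrt ?SY)"
      unfolding Yh_def by (intro ext lin_div)
    then have "sqn {..<m2} (lin_apply A2 ?Lm Yh) = sqn {..<m2} (lin_apply A2 ?Lm Y) / ?SY"
      using SY by (simp add: sqn_div)
    then have S2: "sqn {..<m2} (lin_apply A2 ?Lm Y) = sqn {..<m2} (lin_apply A2 ?Lm Yh) * ?SY"
      using SY by simp
    have lo: "1 - \<delta> / 3 \<le> sqn {..<m2} (lin_apply A2 ?Lm Yh)" and hi: "sqn {..<m2} (lin_apply A2 ?Lm Yh) \<le> 1 + \<delta> / 3"
      using rb sYh by auto
    have "(1 - \<delta> / 3) * ?SY \<le> sqn {..<m2} (lin_apply A2 ?Lm Yh) * ?SY"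
      using lo SY by (intro mult_right_mono) auto
    moreover have "sqn {..<m2} (lin_apply A2 ?Lm Yh) * ?SY \<le> (1 + \<delta> / 3) * ?SY"
      using hi SY by (intro mult_right_mono) auto
    ultimately show ?thesis unfolding S2 by simp
  qed
qed

lemma fin_arith:
  fixes \<delta> SX SY S2 :: real
  assumes d0: "0 \<le> \<delta>" and d1: "\<delta> < 1" and sx: "0 \<le> SX"
    and b: "\<bar>SY - SX\<bar> \<le> \<delta> / 6 * SX"
    and lo: "(1 - \<delta> / 3) * SY \<le> S2" and hi: "S2 \<le> (1 + \<delta> / 3) * SY"
  shows "(1 - \<delta>) * SX \<le> S2 \<and> S2 \<le> (1 + \<delta>) * SX"
proof
  have b1: "SY - SX \<le> \<delta> / 6 * SX" and b2: "SX - SY \<le> \<delta> / 6 * SX" using b abs_le_iff[of "SY - SX" "\<delta> / 6 * SX"] by linarith+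
  have e1: "(1 + \<delta> / 6) * SX = SX + \<delta> / 6 * SX" by (simp add: distrib_right)
  have e2: "(1 - \<delta> / 6) * SX = SX - \<delta> / 6 * SX" by (simp add: left_diff_distrib)
  have up: "SY \<le> (1 + \<delta> / 6) * SX" unfolding e1 using b1 by linarith
  have dn: "(1 - \<delta> / 6) * SX \<le> SY" unfolding e2 using b2 by linarith
  have dd: "\<delta> * \<delta> \<le> \<delta>" using d0 d1 by (simp add: mult_left_le)
  have "(1 - \<delta> / 3) * ((1 - \<delta> / 6) * SX) \<le> (1 - \<delta> / 3) * SY"
    using dn d1 by (intro mult_left_mono) auto
  moreover have "(1 - \<delta>) * SX \<le> (1 - \<delta> / 3) * ((1 - \<delta> / 6) * SX)"
  proof -
    have "(1 - \<delta>) \<le> (1 - \<delta> / 3) * (1 - \<delta> / 6)" using dd d0 by (simp add: algebra_simps)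
    then show ?thesis using sx by (simp add: mult_right_mono mult.assoc[symmetric])
  qed
  ultimately show "(1 - \<delta>) * SX \<le> S2" using lo by linarith
  have "(1 + \<delta> / 3) * SY \<le> (1 + \<delta> / 3) * ((1 + \<delta> / 6) * SX)"
    using up d0 by (intro mult_left_mono) auto
  moreover have "(1 + \<delta> / 3) * ((1 + \<delta> / 6) * SX) \<le> (1 + \<delta>) * SX"
  proof -
    have "(1 + \<delta> / 3) * (1 + \<delta> / 6) \<le> 1 + \<delta>" using dd d0 by (simp add: algebra_simps)
    then show ?thesis using sx by (simp add: mult_right_mono mult.assoc[symmetric])
  qed
  ultimately show "S2 \<le> (1 + \<delta>) * SX" using hi by linarith
qed

theorem theorem2:
  fixes d n \<kappa> r m m2 :: nat and \<epsilon> :: real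
    and A :: "nat \<Rightarrow> nat \<Rightarrow> nat list \<Rightarrow> real"
    and A2 :: "nat \<Rightarrow> nat list \<Rightarrow> real"
  defines "d' \<equiv> d div \<kappa>"
  defines "\<delta> \<equiv> 12 * real d' * real r ^ d * \<epsilon>"
  assumes "d \<ge> 1" and "n \<ge> 1" and "\<kappa> \<ge> 1" and "\<kappa> dvd d" and "r \<ge> 2"
    and "\<delta> < 1"
    and "\<forall>i<d'. rip (tidx \<kappa> {..<n}) {..<m} (lin_apply (A i) (tidx \<kappa> {..<n})) \<epsilon> (S12 \<kappa> n)"
    and "rip (tidx d' {..<m}) {..<m2} (lin_apply A2 (tidx d' {..<m})) (\<delta> / 3)
           (nearly_orth d' m (r ^ \<kappa>) (1 + \<epsilon>) \<epsilon> (1 - \<delta> / 3))"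
  shows "\<forall>X. hosvd_rank_le d n r X \<longrightarrow>
           (1 - \<delta>) * sqn (tidx d {..<n}) X \<le> sqn {..<m2} (A2nd \<kappa> d' n m A A2 X) \<and>
           sqn {..<m2} (A2nd \<kappa> d' n m A A2 X) \<le> (1 + \<delta>) * sqn (tidx d {..<n}) X"
proof -
  have hd: "d' = d div \<kappa>" using \<open>d' \<equiv> d div \<kappa>\<close> by simp
  have h\<delta>: "\<delta> = 12 * real d' * real r ^ d * \<epsilon>" using \<open>\<delta> \<equiv> 12 * real d' * real r ^ d * \<epsilon>\<close> by simp
  have d1: "d \<ge> 1" and n1: "n \<ge> 1" and k1: "\<kappa> \<ge> 1" and kd: "\<kappa> dvd d" and r2: "r \<ge> 2" and \<delta>1: "\<delta> < 1"
    using assms by auto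
  have ripA: "\<forall>i<d'. rip (tidx \<kappa> {..<n}) {..<m} (lin_apply (A i) (tidx \<kappa> {..<n})) \<epsilon> (S12 \<kappa> n)"
    using assms by blast
  have ripB: "rip (tidx d' {..<m}) {..<m2} (lin_apply A2 (tidx d' {..<m})) (\<delta> / 3)
           (nearly_orth d' m (r ^ \<kappa>) (1 + \<epsilon>) \<epsilon> (1 - \<delta> / 3))"
    using assms by blast
  have dd: "d = d' * \<kappa>" using kd hd by simp
  have d'1: "d' \<ge> 1" using dd d1 by (cases d') auto
  have e0: "\<epsilon> \<ge> 0"
  proof -
    define u0 where "u0 = (\<lambda>(j::nat) (t::nat). if t = 0 then (1::real) else 0)"
    have su: "sqn {..<n} (u0 j) = 1" for j
    proof -
      have "sqn {..<n} (u0 j) = (\<Sum>t<n. if t = 0 then 1 else 0)"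
        unfolding sqn_def u0_def by (intro sum.cong) auto
      also have "\<dots> = 1" using n1 by simp
      finally show ?thesis .
    qed
    have x0: "(\<lambda>c. \<Prod>j<\<kappa>. u0 j (c ! j)) \<in> S1 \<kappa> n" unfolding S1_def using su by blast
    then have "(\<lambda>c. \<Prod>j<\<kappa>. u0 j (c ! j)) \<in> S12 \<kappa> n" unfolding S12_def by simp
    moreover have "rip (tidx \<kappa> {..<n}) {..<m} (lin_apply (A 0) (tidx \<kappa> {..<n})) \<epsilon> (S12 \<kappa> n)"
      using ripA d'1 by simp
    ultimately have "(1 - \<epsilon>) * 1 \<le> (1 + \<epsilon>) * 1"
      unfolding rip_def using S1_sqn[OF x0] by (metis order_trans)
    then show ?thesis by simp
  qed
  have rd: "real r ^ d \<ge> 1" using r2 by (simp add: one_le_power)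
  have \<delta>0: "\<delta> \<ge> 0" unfolding h\<delta> using e0 by simp
  have de: "real d' * \<epsilon> \<le> 1"
  proof -
    have "real d' * \<epsilon> * 1 \<le> real d' * \<epsilon> * real r ^ d"
      using rd e0 by (intro mult_left_mono) auto
    then have "12 * (real d' * \<epsilon>) \<le> \<delta>" unfolding h\<delta> by (simp add: mult_ac)
    then show ?thesis using \<delta>1 by simp
  qed
  show ?thesis
  proof (intro allI impI)
    fix X assume hx: "hosvd_rank_le d n r X"
    define Y where "Y = multi_mode_prod d' (tidx \<kappa> {..<n}) A (reshape X)"
    obtain g z where bnd0: "\<bar>sqn (tidx d' {..<m}) Y - sqn (tidx d {..<n}) X\<bar> \<le> 2 * real d' * \<epsilon> * real r ^ d * sqn (tidx d {..<n}) X"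
      and rep: "\<forall>ls. Y ls = (\<Sum>kss\<in>tidx d' (tidx \<kappa> {..<r}). g kss * (\<Prod>i<d'. z i (kss ! i) (ls ! i)))"
      using Y_bound[OF k1 n1 dd hx e0 de ripA] unfolding Y_def by blast
    have bnd: "\<bar>sqn (tidx d' {..<m}) Y - sqn (tidx d {..<n}) X\<bar> \<le> \<delta> / 6 * sqn (tidx d {..<n}) X"
      using bnd0 unfolding h\<delta> by (simp add: mult_ac)
    have ab: "(1 - \<delta> / 3) * sqn (tidx d' {..<m}) Y \<le> sqn {..<m2} (lin_apply A2 (tidx d' {..<m}) Y) \<and>
         sqn {..<m2} (lin_apply A2 (tidx d' {..<m}) Y) \<le> (1 + \<delta> / 3) * sqn (tidx d' {..<m}) Y"
      by (rule A2_bound[OF d'1 e0 \<delta>0 rep ripB])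
    have eqA: "A2nd \<kappa> d' n m A A2 X = lin_apply A2 (tidx d' {..<m}) Y"
      unfolding A2nd_def Y_def ..
    show "(1 - \<delta>) * sqn (tidx d {..<n}) X \<le> sqn {..<m2} (A2nd \<kappa> d' n m A A2 X) \<and>
           sqn {..<m2} (A2nd \<kappa> d' n m A A2 X) \<le> (1 + \<delta>) * sqn (tidx d {..<n}) X"
      unfolding eqA using fin_arith[OF \<delta>0 \<delta>1 sqn_nonneg bnd] ab by blast
  qed
qed

end
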